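(* With the icosahedral setting of the context, for every $y_0\in\mathcal{I}$ and every integer $n\ge0$, \[ V\left(\langle x,y_0\rangle^n\right)=\frac{n!}{\nu(n)}\,q_n(x;y_0). \]
   Context: Let $\tau=(1+\sqrt5)/2$. Vectors in $\mathbb{R}^3$ are row vectors; $\langle x,y\rangle=\sum x_iy_i$. For $v\neq0$, $x\sigma_v=x-2\frac{\langle x,v\rangle}{|v|^2}v$. Let $R_+=\{(2,0,0),(0,2,0),(0,0,2),(\tau,\pm\tau^{-1},\pm1),(\pm1,\tau,\pm\tau^{-1}),(\tau^{-1},\pm1,\tau),(-\tau^{-1},1,\tau),(\tau^{-1},1,-\tau)\}$ (15 vectors, signs independent). For real $\kappa\ge0$ the Dunkl operators are $\mathcal{D}_if(x)=\partial_if(x)+\kappa\sum_{v\in R_+}\frac{f(x)-f(x\sigma_v)}{\langle x,v\rangle}v_i$, $\langle u,\nabla_\kappa\rangle=\sum_iu_i\mathcal{D}_i$. $V$ denotes the intertwining operator: the linear operator on polynomials in $x\in\mathbb{R}^3$ with $V1=1$, $V$ maps homogeneous polynomials of degree $n$ to homogeneous polynomials of degree $n$, and $\langle u,\nabla_\kappa\rangle V p=V(\langle u,\nabla\rangle p)$ for all $u\in\mathbb{R}^3$ and polynomials $p$, where $\nabla$ is the ordinary gradient. Let $\mathcal{I}=\{(0,\pm\tau,\pm1),(\pm1,0,\pm\tau),(\pm\tau,\pm1,0)\}$. For $y_0\in\mathcal{I}$, $q_n(x;y_0)$ are defined by $\left(1-r\langle x,y_0\rangle\right)^{-1}\prod_{y\in\mathcal{I}}\left(1-r\langle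 x,y\rangle\right)^{-\kappa}=\sum_{n\ge0}q_n(x;y_0)r^n$. Define $\nu(n)=2^n(6\kappa+1)_s(5\kappa+\tfrac12)_t$ with $s=\lfloor n/2\rfloor$, $t=\lfloor (n+1)/2\rfloor$, where $(a)_k=a(a+1)\cdots(a+k-1)$ is the Pochhammer symbol. *)

theory Defs
  imports "HOL-Analysis.Analysis"
begin

definition tau :: real where "tau = (1 + sqrt 5) / 2"

definition vec3 :: "real \<Rightarrow> real \<Rightarrow> real \<Rightarrow> real^3" where
  "vec3 a b c = vector [a, b, c]"

definition refl :: "real^3 \<Rightarrow> real^3 \<Rightarrow> real^3" where
  "refl v x = x - (2 * (x \<bullet> v) / (norm v)^2) *\<^sub>R v"

definition Rplus :: "(real^3) set" where
  "Rplus = {vec3 2 0 0, vec3 0 2 0, vec3 0 0 2}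
     \<union> {vec3 tau (s * inverse tau) t | s t. s \<in> {-1,1} \<and> t \<in> {-1,1}}
     \<union> {vec3 s tau (t * inverse tau) | s t. s \<in> {-1,1} \<and> t \<in> {-1,1}}
     \<union> {vec3 (inverse tau) s tau | s. s \<in> {-1,1}}
     \<union> {vec3 (- inverse tau) 1 tau, vec3 (inverse tau) 1 (- tau)}"

definition Icos :: "(real^3) set" where
  "Icos = {vec3 0 (s * tau) t | s t. s \<in> {-1,1} \<and> t \<in> {-1,1}}
     \<union> {vec3 s 0 (t * tau) | s t. s \<in> {-1,1} \<and> t \<in> {-1,1}}
     \<union> {vec3 (s * tau) t 0 | s t. s \<in> {-1,1} \<and> t \<in> {-1,1}}"

definition mono3 :: "nat \<times> nat \<times> nat \<Rightarrow> real^3 \<Rightarrow> real" where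
  "mono3 a x = (case a of (i, j, k) \<Rightarrow> (x$1)^i * (x$2)^j * (x$3)^k)"

definition poly3 :: "(real^3 \<Rightarrow> real) \<Rightarrow> bool" where
  "poly3 p \<longleftrightarrow> (\<exists>S c. finite S \<and> p = (\<lambda>x. \<Sum>a\<in>S. c a * mono3 a x))"

definition homog3 :: "nat \<Rightarrow> (real^3 \<Rightarrow> real) \<Rightarrow> bool" where
  "homog3 n p \<longleftrightarrow> (\<exists>S c. finite S \<and> (\<forall>(i,j,k)\<in>S. i + j + k = n)
      \<and> p = (\<lambda>x. \<Sum>a\<in>S. c a * mono3 a x))"

definition partial :: "3 \<Rightarrow> (real^3 \<Rightarrow> real) \<Rightarrow> real^3 \<Rightarrow> real" where
  "partial i f x = deriv (\<lambda>t. f (x + t *\<^sub>R axis i 1)) 0"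

definition dirderiv :: "real^3 \<Rightarrow> (real^3 \<Rightarrow> real) \<Rightarrow> real^3 \<Rightarrow> real" where
  "dirderiv u f x = (\<Sum>i\<in>UNIV. u$i * partial i f x)"

definition dunkl :: "real \<Rightarrow> 3 \<Rightarrow> (real^3 \<Rightarrow> real) \<Rightarrow> real^3 \<Rightarrow> real" where
  "dunkl \<kappa> i f x = partial i f x
     + \<kappa> * (\<Sum>v\<in>Rplus. (f x - f (refl v x)) / (x \<bullet> v) * v$i)"

definition dunkl_dir :: "real \<Rightarrow> real^3 \<Rightarrow> (real^3 \<Rightarrow> real) \<Rightarrow> real^3 \<Rightarrow> real" where
  "dunkl_dir \<kappa> u f x = (\<Sum>i\<in>UNIV. u$i * dunkl \<kappa> i f x)"

definition intertwining :: "real \<Rightarrow> ((real^3 \<Rightarrow> real) \<Rightarrow> (real^3 \<Rightarrow> real)) \<Rightarrow> bool" where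
  "intertwining \<kappa> V \<longleftrightarrow>
     (\<forall>p q a b. poly3 p \<longrightarrow> poly3 q \<longrightarrow>
         V (\<lambda>x. a * p x + b * q x) = (\<lambda>x. a * V p x + b * V q x))
   \<and> V (\<lambda>x. 1) = (\<lambda>x. 1)
   \<and> (\<forall>n p. homog3 n p \<longrightarrow> homog3 n (V p))
   \<and> (\<forall>u p x. poly3 p \<longrightarrow> (\<forall>v\<in>Rplus. x \<bullet> v \<noteq> 0) \<longrightarrow>
         dunkl_dir \<kappa> u (V p) x = V (dirderiv u p) x)"

definition genfun :: "real \<Rightarrow> real^3 \<Rightarrow> real^3 \<Rightarrow> real \<Rightarrow> real" where
  "genfun \<kappa> x y0 r = inverse (1 - r * (x \<bullet> y0))
      * (\<Prod>y\<in>Icos. (1 - r * (x \<bullet> y)) powr (- \<kappa>))"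

definition qn :: "real \<Rightarrow> nat \<Rightarrow> real^3 \<Rightarrow> real^3 \<Rightarrow> real" where
  "qn \<kappa> n x y0 = (deriv ^^ n) (genfun \<kappa> x y0) 0 / fact n"

definition nu :: "real \<Rightarrow> nat \<Rightarrow> real" where
  "nu \<kappa> n = 2 ^ n * pochhammer (6 * \<kappa> + 1) (n div 2)
                   * pochhammer (5 * \<kappa> + 1/2) ((n + 1) div 2)"

end

theory Submission
  imports Defs
begin

lemma tau_sq: "tau * tau = tau + 1"
  unfolding tau_def by (simp add: field_simps) 
lemma tau_bounds: "tau > 1.6" "tau < 1.7"
proof -
  have "2.2 < sqrt 5" by (rule real_less_rsqrt) (simp add: power2_eq_square)
  moreover have "sqrt 5 < 2.4" by (rule real_less_lsqrt) (simp_all add: power2_eq_square)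
  ultimately show "tau > 1.6" "tau < 1.7" unfolding tau_def by simp_all
qed
lemma tau_nz: "tau \<noteq> 0" using tau_bounds by simp
lemma inv_tau: "inverse tau = tau - 1"
proof -
  have "tau * (tau - 1) = 1" using tau_sq by (simp add: algebra_simps)
  thus ?thesis using tau_nz by (simp add: field_simps)
qed
lemma vec3_nth[simp]: "vec3 a b c $ 1 = a" "vec3 a b c $ 2 = b" "vec3 a b c $ 3 = c"
  unfolding vec3_def by simp_all
lemma vec3_eq_iff: "vec3 a b c = vec3 d e f \<longleftrightarrow> a = d \<and> b = e \<and> c = f"
  by (auto simp: vec_eq_iff forall_3)
lemma inner_vec3: "vec3 a b c \<bullet> vec3 d e f = a*d + b*e + c*f"
  by (simp add: inner_vec_def sum_3)
lemma vec3_ops: "vec3 a b c - vec3 d e f = vec3 (a-d) (b-e) (c-f)"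
  "r *\<^sub>R vec3 a b c = vec3 (r*a) (r*b) (r*c)" "- vec3 a b c = vec3 (-a) (-b) (-c)"
  by (simp_all add: vec3_eq_iff vec_eq_iff forall_3)
lemma tau_sq2: "tau * (tau * x) = (tau + 1) * x"
  by (metis mult.assoc tau_sq)

definition Ilist :: "(real^3) list" where "Ilist = [vec3 (0) (-tau) (-1), vec3 (0) (-tau) (1), vec3 (0) (tau) (-1), vec3 (0) (tau) (1), vec3 (-1) (0) (-tau), vec3 (-1) (0) (tau), vec3 (1) (0) (-tau), vec3 (1) (0) (tau), vec3 (-tau) (-1) (0), vec3 (-tau) (1) (0), vec3 (tau) (-1) (0), vec3 (tau) (1) (0)]"

definition Rlist :: "(real^3) list" where "Rlist = [vec3 (2) (0) (0), vec3 (0) (2) (0), vec3 (0) (0) (2), vec3 (tau) (1 - tau) (-1), vec3 (tau) (1 - tau) (1), vec3 (tau) (tau - 1) (-1), vec3 (tau) (tau - 1) (1), vec3 (-1) (tau) (1 - tau), vec3 (-1) (tau) (tau - 1), vec3 (1) (tau) (1 - tau), vec3 (1) (tau) (tau - 1), vec3 (tau - 1) (-1) (tau), vec3 (tau - 1) (1) (tau), vec3 (1 - tau) (1) (tau), vec3 (tau - 1) (1) (-tau)]"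

definition iv :: "nat \<Rightarrow> real^3" where "iv i = Ilist ! (i - 2)"

definition rv :: "nat \<Rightarrow> real^3" where "rv i = Rlist ! (i - 2)"

lemma iv_simps: "iv 2 = vec3 (0) (-tau) (-1)" "iv 3 = vec3 (0) (-tau) (1)" "iv 4 = vec3 (0) (tau) (-1)" "iv 5 = vec3 (0) (tau) (1)" "iv 6 = vec3 (-1) (0) (-tau)" "iv 7 = vec3 (-1) (0) (tau)" "iv 8 = vec3 (1) (0) (-tau)" "iv 9 = vec3 (1) (0) (tau)" "iv 10 = vec3 (-tau) (-1) (0)" "iv 11 = vec3 (-tau) (1) (0)" "iv 12 = vec3 (tau) (-1) (0)" "iv 13 = vec3 (tau) (1) (0)"
  by (simp_all add: iv_def Ilist_def)

lemma rv_simps: "rv 2 = vec3 (2) (0) (0)" "rv 3 = vec3 (0) (2) (0)" "rv 4 = vec3 (0) (0) (2)" "rv 5 = vec3 (tau) (1 - tau) (-1)" "rv 6 = vec3 (tau) (1 - tau) (1)" "rv 7 = vec3 (tau) (tau - 1) (-1)" "rv 8 = vec3 (tau) (tau - 1) (1)" "rv 9 = vec3 (-1) (tau) (1 - tau)" "rv 10 = vec3 (-1) (tau) (tau - 1)" "rv 11 = vec3 (1) (tau) (1 - tau)" "rv 12 = vec3 (1) (tau) (tau - 1)" "rv 13 = vec3 (tau - 1) (-1) (tau)" "rv 14 = vec3 (tau - 1) (1) (tau)" "rv 15 = vec3 (1 - tau) (1) (tau)" "rv 16 = vec3 (tau - 1) (1) (-tau)"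
  by (simp_all add: rv_def Rlist_def)

lemma Iidx: "(i::nat) \<in> {2..<14} \<Longrightarrow> i = 2 \<or> i = 3 \<or> i = 4 \<or> i = 5 \<or> i = 6 \<or> i = 7 \<or> i = 8 \<or> i = 9 \<or> i = 10 \<or> i = 11 \<or> i = 12 \<or> i = 13"
  unfolding atLeastLessThan_iff by presburger

lemma Ridx: "(i::nat) \<in> {2..<17} \<Longrightarrow> i = 2 \<or> i = 3 \<or> i = 4 \<or> i = 5 \<or> i = 6 \<or> i = 7 \<or> i = 8 \<or> i = 9 \<or> i = 10 \<or> i = 11 \<or> i = 12 \<or> i = 13 \<or> i = 14 \<or> i = 15 \<or> i = 16"
  unfolding atLeastLessThan_iff by presburger

lemma rv_norm_2: "rv 2 \<bullet> rv 2 = 4"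
  apply (simp add: rv_simps inner_vec3 field_simps)
  by (simp_all add: tau_sq tau_sq2 algebra_simps)?

lemma rv_norm_3: "rv 3 \<bullet> rv 3 = 4"
  apply (simp add: rv_simps inner_vec3 field_simps)
  by (simp_all add: tau_sq tau_sq2 algebra_simps)?

lemma rv_norm_4: "rv 4 \<bullet> rv 4 = 4"
  apply (simp add: rv_simps inner_vec3 field_simps)
  by (simp_all add: tau_sq tau_sq2 algebra_simps)?

lemma rv_norm_5: "rv 5 \<bullet> rv 5 = 4"
  apply (simp add: rv_simps inner_vec3 field_simps)
  by (simp_all add: tau_sq tau_sq2 algebra_simps)?

lemma rv_norm_6: "rv 6 \<bullet> rv 6 = 4"
  apply (simp add: rv_simps inner_vec3 field_simps)
  by (simp_all add: tau_sq tau_sq2 algebra_simps)?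

lemma rv_norm_7: "rv 7 \<bullet> rv 7 = 4"
  apply (simp add: rv_simps inner_vec3 field_simps)
  by (simp_all add: tau_sq tau_sq2 algebra_simps)?

lemma rv_norm_8: "rv 8 \<bullet> rv 8 = 4"
  apply (simp add: rv_simps inner_vec3 field_simps)
  by (simp_all add: tau_sq tau_sq2 algebra_simps)?

lemma rv_norm_9: "rv 9 \<bullet> rv 9 = 4"
  apply (simp add: rv_simps inner_vec3 field_simps)
  by (simp_all add: tau_sq tau_sq2 algebra_simps)?

lemma rv_norm_10: "rv 10 \<bullet> rv 10 = 4"
  apply (simp add: rv_simps inner_vec3 field_simps)
  by (simp_all add: tau_sq tau_sq2 algebra_simps)?

lemma rv_norm_11: "rv 11 \<bullet> rv 11 = 4"
  apply (simp add: rv_simps inner_vec3 field_simps)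
  by (simp_all add: tau_sq tau_sq2 algebra_simps)?

lemma rv_norm_12: "rv 12 \<bullet> rv 12 = 4"
  apply (simp add: rv_simps inner_vec3 field_simps)
  by (simp_all add: tau_sq tau_sq2 algebra_simps)?

lemma rv_norm_13: "rv 13 \<bullet> rv 13 = 4"
  apply (simp add: rv_simps inner_vec3 field_simps)
  by (simp_all add: tau_sq tau_sq2 algebra_simps)?

lemma rv_norm_14: "rv 14 \<bullet> rv 14 = 4"
  apply (simp add: rv_simps inner_vec3 field_simps)
  by (simp_all add: tau_sq tau_sq2 algebra_simps)?

lemma rv_norm_15: "rv 15 \<bullet> rv 15 = 4"
  apply (simp add: rv_simps inner_vec3 field_simps)
  by (simp_all add: tau_sq tau_sq2 algebra_simps)?

lemma rv_norm_16: "rv 16 \<bullet> rv 16 = 4"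
  apply (simp add: rv_simps inner_vec3 field_simps)
  by (simp_all add: tau_sq tau_sq2 algebra_simps)?

lemma rv_norm: assumes "i \<in> {2..<17}" shows "rv i \<bullet> rv i = 4"
  using Ridx[OF assms] rv_norm_2 rv_norm_3 rv_norm_4 rv_norm_5 rv_norm_6 rv_norm_7 rv_norm_8 rv_norm_9 rv_norm_10 rv_norm_11 rv_norm_12 rv_norm_13 rv_norm_14 rv_norm_15 rv_norm_16 by auto

lemma refl_rv: "i \<in> {2..<17} \<Longrightarrow> refl (rv i) y = y - ((y \<bullet> rv i) / 2) *\<^sub>R rv i"
  by (simp add: refl_def power2_norm_eq_inner rv_norm)

lemma rt_2_2: "refl (rv 2) (iv 2) = iv 2"
  apply (subst refl_rv, simp)
  apply (simp add: iv_simps rv_simps vec3_ops inner_vec3 vec3_eq_iff field_simps)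
  by (simp_all add: tau_sq tau_sq2 algebra_simps)?

lemma rt_2_3: "refl (rv 2) (iv 3) = iv 3"
  apply (subst refl_rv, simp)
  apply (simp add: iv_simps rv_simps vec3_ops inner_vec3 vec3_eq_iff field_simps)
  by (simp_all add: tau_sq tau_sq2 algebra_simps)?

lemma rt_2_4: "refl (rv 2) (iv 4) = iv 4"
  apply (subst refl_rv, simp)
  apply (simp add: iv_simps rv_simps vec3_ops inner_vec3 vec3_eq_iff field_simps)
  by (simp_all add: tau_sq tau_sq2 algebra_simps)?

lemma rt_2_5: "refl (rv 2) (iv 5) = iv 5"
  apply (subst refl_rv, simp)
  apply (simp add: iv_simps rv_simps vec3_ops inner_vec3 vec3_eq_iff field_simps)
  by (simp_all add: tau_sq tau_sq2 algebra_simps)?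

lemma rt_2_6: "refl (rv 2) (iv 6) = iv 8"
  apply (subst refl_rv, simp)
  apply (simp add: iv_simps rv_simps vec3_ops inner_vec3 vec3_eq_iff field_simps)
  by (simp_all add: tau_sq tau_sq2 algebra_simps)?

lemma rt_2_7: "refl (rv 2) (iv 7) = iv 9"
  apply (subst refl_rv, simp)
  apply (simp add: iv_simps rv_simps vec3_ops inner_vec3 vec3_eq_iff field_simps)
  by (simp_all add: tau_sq tau_sq2 algebra_simps)?

lemma rt_2_8: "refl (rv 2) (iv 8) = iv 6"
  apply (subst refl_rv, simp)
  apply (simp add: iv_simps rv_simps vec3_ops inner_vec3 vec3_eq_iff field_simps)
  by (simp_all add: tau_sq tau_sq2 algebra_simps)?

lemma rt_2_9: "refl (rv 2) (iv 9) = iv 7"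
  apply (subst refl_rv, simp)
  apply (simp add: iv_simps rv_simps vec3_ops inner_vec3 vec3_eq_iff field_simps)
  by (simp_all add: tau_sq tau_sq2 algebra_simps)?

lemma rt_2_10: "refl (rv 2) (iv 10) = iv 12"
  apply (subst refl_rv, simp)
  apply (simp add: iv_simps rv_simps vec3_ops inner_vec3 vec3_eq_iff field_simps)
  by (simp_all add: tau_sq tau_sq2 algebra_simps)?

lemma rt_2_11: "refl (rv 2) (iv 11) = iv 13"
  apply (subst refl_rv, simp)
  apply (simp add: iv_simps rv_simps vec3_ops inner_vec3 vec3_eq_iff field_simps)
  by (simp_all add: tau_sq tau_sq2 algebra_simps)?

lemma rt_2_12: "refl (rv 2) (iv 12) = iv 10"
  apply (subst refl_rv, simp)
  apply (simp add: iv_simps rv_simps vec3_ops inner_vec3 vec3_eq_iff field_simps)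
  by (simp_all add: tau_sq tau_sq2 algebra_simps)?

lemma rt_2_13: "refl (rv 2) (iv 13) = iv 11"
  apply (subst refl_rv, simp)
  apply (simp add: iv_simps rv_simps vec3_ops inner_vec3 vec3_eq_iff field_simps)
  by (simp_all add: tau_sq tau_sq2 algebra_simps)?

lemma rt_3_2: "refl (rv 3) (iv 2) = iv 4"
  apply (subst refl_rv, simp)
  apply (simp add: iv_simps rv_simps vec3_ops inner_vec3 vec3_eq_iff field_simps)
  by (simp_all add: tau_sq tau_sq2 algebra_simps)?

lemma rt_3_3: "refl (rv 3) (iv 3) = iv 5"
  apply (subst refl_rv, simp)
  apply (simp add: iv_simps rv_simps vec3_ops inner_vec3 vec3_eq_iff field_simps)
  by (simp_all add: tau_sq tau_sq2 algebra_simps)?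

lemma rt_3_4: "refl (rv 3) (iv 4) = iv 2"
  apply (subst refl_rv, simp)
  apply (simp add: iv_simps rv_simps vec3_ops inner_vec3 vec3_eq_iff field_simps)
  by (simp_all add: tau_sq tau_sq2 algebra_simps)?

lemma rt_3_5: "refl (rv 3) (iv 5) = iv 3"
  apply (subst refl_rv, simp)
  apply (simp add: iv_simps rv_simps vec3_ops inner_vec3 vec3_eq_iff field_simps)
  by (simp_all add: tau_sq tau_sq2 algebra_simps)?

lemma rt_3_6: "refl (rv 3) (iv 6) = iv 6"
  apply (subst refl_rv, simp)
  apply (simp add: iv_simps rv_simps vec3_ops inner_vec3 vec3_eq_iff field_simps)
  by (simp_all add: tau_sq tau_sq2 algebra_simps)?

lemma rt_3_7: "refl (rv 3) (iv 7) = iv 7"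
  apply (subst refl_rv, simp)
  apply (simp add: iv_simps rv_simps vec3_ops inner_vec3 vec3_eq_iff field_simps)
  by (simp_all add: tau_sq tau_sq2 algebra_simps)?

lemma rt_3_8: "refl (rv 3) (iv 8) = iv 8"
  apply (subst refl_rv, simp)
  apply (simp add: iv_simps rv_simps vec3_ops inner_vec3 vec3_eq_iff field_simps)
  by (simp_all add: tau_sq tau_sq2 algebra_simps)?

lemma rt_3_9: "refl (rv 3) (iv 9) = iv 9"
  apply (subst refl_rv, simp)
  apply (simp add: iv_simps rv_simps vec3_ops inner_vec3 vec3_eq_iff field_simps)
  by (simp_all add: tau_sq tau_sq2 algebra_simps)?

lemma rt_3_10: "refl (rv 3) (iv 10) = iv 11"
  apply (subst refl_rv, simp)
  apply (simp add: iv_simps rv_simps vec3_ops inner_vec3 vec3_eq_iff field_simps)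
  by (simp_all add: tau_sq tau_sq2 algebra_simps)?

lemma rt_3_11: "refl (rv 3) (iv 11) = iv 10"
  apply (subst refl_rv, simp)
  apply (simp add: iv_simps rv_simps vec3_ops inner_vec3 vec3_eq_iff field_simps)
  by (simp_all add: tau_sq tau_sq2 algebra_simps)?

lemma rt_3_12: "refl (rv 3) (iv 12) = iv 13"
  apply (subst refl_rv, simp)
  apply (simp add: iv_simps rv_simps vec3_ops inner_vec3 vec3_eq_iff field_simps)
  by (simp_all add: tau_sq tau_sq2 algebra_simps)?

lemma rt_3_13: "refl (rv 3) (iv 13) = iv 12"
  apply (subst refl_rv, simp)
  apply (simp add: iv_simps rv_simps vec3_ops inner_vec3 vec3_eq_iff field_simps)
  by (simp_all add: tau_sq tau_sq2 algebra_simps)?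

lemma rt_4_2: "refl (rv 4) (iv 2) = iv 3"
  apply (subst refl_rv, simp)
  apply (simp add: iv_simps rv_simps vec3_ops inner_vec3 vec3_eq_iff field_simps)
  by (simp_all add: tau_sq tau_sq2 algebra_simps)?

lemma rt_4_3: "refl (rv 4) (iv 3) = iv 2"
  apply (subst refl_rv, simp)
  apply (simp add: iv_simps rv_simps vec3_ops inner_vec3 vec3_eq_iff field_simps)
  by (simp_all add: tau_sq tau_sq2 algebra_simps)?

lemma rt_4_4: "refl (rv 4) (iv 4) = iv 5"
  apply (subst refl_rv, simp)
  apply (simp add: iv_simps rv_simps vec3_ops inner_vec3 vec3_eq_iff field_simps)
  by (simp_all add: tau_sq tau_sq2 algebra_simps)?

lemma rt_4_5: "refl (rv 4) (iv 5) = iv 4"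
  apply (subst refl_rv, simp)
  apply (simp add: iv_simps rv_simps vec3_ops inner_vec3 vec3_eq_iff field_simps)
  by (simp_all add: tau_sq tau_sq2 algebra_simps)?

lemma rt_4_6: "refl (rv 4) (iv 6) = iv 7"
  apply (subst refl_rv, simp)
  apply (simp add: iv_simps rv_simps vec3_ops inner_vec3 vec3_eq_iff field_simps)
  by (simp_all add: tau_sq tau_sq2 algebra_simps)?

lemma rt_4_7: "refl (rv 4) (iv 7) = iv 6"
  apply (subst refl_rv, simp)
  apply (simp add: iv_simps rv_simps vec3_ops inner_vec3 vec3_eq_iff field_simps)
  by (simp_all add: tau_sq tau_sq2 algebra_simps)?

lemma rt_4_8: "refl (rv 4) (iv 8) = iv 9"
  apply (subst refl_rv, simp)
  apply (simp add: iv_simps rv_simps vec3_ops inner_vec3 vec3_eq_iff field_simps)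
  by (simp_all add: tau_sq tau_sq2 algebra_simps)?

lemma rt_4_9: "refl (rv 4) (iv 9) = iv 8"
  apply (subst refl_rv, simp)
  apply (simp add: iv_simps rv_simps vec3_ops inner_vec3 vec3_eq_iff field_simps)
  by (simp_all add: tau_sq tau_sq2 algebra_simps)?

lemma rt_4_10: "refl (rv 4) (iv 10) = iv 10"
  apply (subst refl_rv, simp)
  apply (simp add: iv_simps rv_simps vec3_ops inner_vec3 vec3_eq_iff field_simps)
  by (simp_all add: tau_sq tau_sq2 algebra_simps)?

lemma rt_4_11: "refl (rv 4) (iv 11) = iv 11"
  apply (subst refl_rv, simp)
  apply (simp add: iv_simps rv_simps vec3_ops inner_vec3 vec3_eq_iff field_simps)
  by (simp_all add: tau_sq tau_sq2 algebra_simps)?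

lemma rt_4_12: "refl (rv 4) (iv 12) = iv 12"
  apply (subst refl_rv, simp)
  apply (simp add: iv_simps rv_simps vec3_ops inner_vec3 vec3_eq_iff field_simps)
  by (simp_all add: tau_sq tau_sq2 algebra_simps)?

lemma rt_4_13: "refl (rv 4) (iv 13) = iv 13"
  apply (subst refl_rv, simp)
  apply (simp add: iv_simps rv_simps vec3_ops inner_vec3 vec3_eq_iff field_simps)
  by (simp_all add: tau_sq tau_sq2 algebra_simps)?

lemma rt_5_2: "refl (rv 5) (iv 2) = iv 10"
  apply (subst refl_rv, simp)
  apply (simp add: iv_simps rv_simps vec3_ops inner_vec3 vec3_eq_iff field_simps)
  by (simp_all add: tau_sq tau_sq2 algebra_simps)?

lemma rt_5_3: "refl (rv 5) (iv 3) = iv 3"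
  apply (subst refl_rv, simp)
  apply (simp add: iv_simps rv_simps vec3_ops inner_vec3 vec3_eq_iff field_simps)
  by (simp_all add: tau_sq tau_sq2 algebra_simps)?

lemma rt_5_4: "refl (rv 5) (iv 4) = iv 4"
  apply (subst refl_rv, simp)
  apply (simp add: iv_simps rv_simps vec3_ops inner_vec3 vec3_eq_iff field_simps)
  by (simp_all add: tau_sq tau_sq2 algebra_simps)?

lemma rt_5_5: "refl (rv 5) (iv 5) = iv 13"
  apply (subst refl_rv, simp)
  apply (simp add: iv_simps rv_simps vec3_ops inner_vec3 vec3_eq_iff field_simps)
  by (simp_all add: tau_sq tau_sq2 algebra_simps)?

lemma rt_5_6: "refl (rv 5) (iv 6) = iv 6"
  apply (subst refl_rv, simp)
  apply (simp add: iv_simps rv_simps vec3_ops inner_vec3 vec3_eq_iff field_simps)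
  by (simp_all add: tau_sq tau_sq2 algebra_simps)?

lemma rt_5_7: "refl (rv 5) (iv 7) = iv 12"
  apply (subst refl_rv, simp)
  apply (simp add: iv_simps rv_simps vec3_ops inner_vec3 vec3_eq_iff field_simps)
  by (simp_all add: tau_sq tau_sq2 algebra_simps)?

lemma rt_5_8: "refl (rv 5) (iv 8) = iv 11"
  apply (subst refl_rv, simp)
  apply (simp add: iv_simps rv_simps vec3_ops inner_vec3 vec3_eq_iff field_simps)
  by (simp_all add: tau_sq tau_sq2 algebra_simps)?

lemma rt_5_9: "refl (rv 5) (iv 9) = iv 9"
  apply (subst refl_rv, simp)
  apply (simp add: iv_simps rv_simps vec3_ops inner_vec3 vec3_eq_iff field_simps)
  by (simp_all add: tau_sq tau_sq2 algebra_simps)?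

lemma rt_5_10: "refl (rv 5) (iv 10) = iv 2"
  apply (subst refl_rv, simp)
  apply (simp add: iv_simps rv_simps vec3_ops inner_vec3 vec3_eq_iff field_simps)
  by (simp_all add: tau_sq tau_sq2 algebra_simps)?

lemma rt_5_11: "refl (rv 5) (iv 11) = iv 8"
  apply (subst refl_rv, simp)
  apply (simp add: iv_simps rv_simps vec3_ops inner_vec3 vec3_eq_iff field_simps)
  by (simp_all add: tau_sq tau_sq2 algebra_simps)?

lemma rt_5_12: "refl (rv 5) (iv 12) = iv 7"
  apply (subst refl_rv, simp)
  apply (simp add: iv_simps rv_simps vec3_ops inner_vec3 vec3_eq_iff field_simps)
  by (simp_all add: tau_sq tau_sq2 algebra_simps)?

lemma rt_5_13: "refl (rv 5) (iv 13) = iv 5"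
  apply (subst refl_rv, simp)
  apply (simp add: iv_simps rv_simps vec3_ops inner_vec3 vec3_eq_iff field_simps)
  by (simp_all add: tau_sq tau_sq2 algebra_simps)?

lemma rt_6_2: "refl (rv 6) (iv 2) = iv 2"
  apply (subst refl_rv, simp)
  apply (simp add: iv_simps rv_simps vec3_ops inner_vec3 vec3_eq_iff field_simps)
  by (simp_all add: tau_sq tau_sq2 algebra_simps)?

lemma rt_6_3: "refl (rv 6) (iv 3) = iv 10"
  apply (subst refl_rv, simp)
  apply (simp add: iv_simps rv_simps vec3_ops inner_vec3 vec3_eq_iff field_simps)
  by (simp_all add: tau_sq tau_sq2 algebra_simps)?

lemma rt_6_4: "refl (rv 6) (iv 4) = iv 13"
  apply (subst refl_rv, simp)
  apply (simp add: iv_simps rv_simps vec3_ops inner_vec3 vec3_eq_iff field_simps)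
  by (simp_all add: tau_sq tau_sq2 algebra_simps)?

lemma rt_6_5: "refl (rv 6) (iv 5) = iv 5"
  apply (subst refl_rv, simp)
  apply (simp add: iv_simps rv_simps vec3_ops inner_vec3 vec3_eq_iff field_simps)
  by (simp_all add: tau_sq tau_sq2 algebra_simps)?

lemma rt_6_6: "refl (rv 6) (iv 6) = iv 12"
  apply (subst refl_rv, simp)
  apply (simp add: iv_simps rv_simps vec3_ops inner_vec3 vec3_eq_iff field_simps)
  by (simp_all add: tau_sq tau_sq2 algebra_simps)?

lemma rt_6_7: "refl (rv 6) (iv 7) = iv 7"
  apply (subst refl_rv, simp)
  apply (simp add: iv_simps rv_simps vec3_ops inner_vec3 vec3_eq_iff field_simps)
  by (simp_all add: tau_sq tau_sq2 algebra_simps)?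

lemma rt_6_8: "refl (rv 6) (iv 8) = iv 8"
  apply (subst refl_rv, simp)
  apply (simp add: iv_simps rv_simps vec3_ops inner_vec3 vec3_eq_iff field_simps)
  by (simp_all add: tau_sq tau_sq2 algebra_simps)?

lemma rt_6_9: "refl (rv 6) (iv 9) = iv 11"
  apply (subst refl_rv, simp)
  apply (simp add: iv_simps rv_simps vec3_ops inner_vec3 vec3_eq_iff field_simps)
  by (simp_all add: tau_sq tau_sq2 algebra_simps)?

lemma rt_6_10: "refl (rv 6) (iv 10) = iv 3"
  apply (subst refl_rv, simp)
  apply (simp add: iv_simps rv_simps vec3_ops inner_vec3 vec3_eq_iff field_simps)
  by (simp_all add: tau_sq tau_sq2 algebra_simps)?

lemma rt_6_11: "refl (rv 6) (iv 11) = iv 9"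
  apply (subst refl_rv, simp)
  apply (simp add: iv_simps rv_simps vec3_ops inner_vec3 vec3_eq_iff field_simps)
  by (simp_all add: tau_sq tau_sq2 algebra_simps)?

lemma rt_6_12: "refl (rv 6) (iv 12) = iv 6"
  apply (subst refl_rv, simp)
  apply (simp add: iv_simps rv_simps vec3_ops inner_vec3 vec3_eq_iff field_simps)
  by (simp_all add: tau_sq tau_sq2 algebra_simps)?

lemma rt_6_13: "refl (rv 6) (iv 13) = iv 4"
  apply (subst refl_rv, simp)
  apply (simp add: iv_simps rv_simps vec3_ops inner_vec3 vec3_eq_iff field_simps)
  by (simp_all add: tau_sq tau_sq2 algebra_simps)?

lemma rt_7_2: "refl (rv 7) (iv 2) = iv 2"
  apply (subst refl_rv, simp)
  apply (simp add: iv_simps rv_simps vec3_ops inner_vec3 vec3_eq_iff field_simps)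
  by (simp_all add: tau_sq tau_sq2 algebra_simps)?

lemma rt_7_3: "refl (rv 7) (iv 3) = iv 12"
  apply (subst refl_rv, simp)
  apply (simp add: iv_simps rv_simps vec3_ops inner_vec3 vec3_eq_iff field_simps)
  by (simp_all add: tau_sq tau_sq2 algebra_simps)?

lemma rt_7_4: "refl (rv 7) (iv 4) = iv 11"
  apply (subst refl_rv, simp)
  apply (simp add: iv_simps rv_simps vec3_ops inner_vec3 vec3_eq_iff field_simps)
  by (simp_all add: tau_sq tau_sq2 algebra_simps)?

lemma rt_7_5: "refl (rv 7) (iv 5) = iv 5"
  apply (subst refl_rv, simp)
  apply (simp add: iv_simps rv_simps vec3_ops inner_vec3 vec3_eq_iff field_simps)
  by (simp_all add: tau_sq tau_sq2 algebra_simps)?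

lemma rt_7_6: "refl (rv 7) (iv 6) = iv 6"
  apply (subst refl_rv, simp)
  apply (simp add: iv_simps rv_simps vec3_ops inner_vec3 vec3_eq_iff field_simps)
  by (simp_all add: tau_sq tau_sq2 algebra_simps)?

lemma rt_7_7: "refl (rv 7) (iv 7) = iv 13"
  apply (subst refl_rv, simp)
  apply (simp add: iv_simps rv_simps vec3_ops inner_vec3 vec3_eq_iff field_simps)
  by (simp_all add: tau_sq tau_sq2 algebra_simps)?

lemma rt_7_8: "refl (rv 7) (iv 8) = iv 10"
  apply (subst refl_rv, simp)
  apply (simp add: iv_simps rv_simps vec3_ops inner_vec3 vec3_eq_iff field_simps)
  by (simp_all add: tau_sq tau_sq2 algebra_simps)?

lemma rt_7_9: "refl (rv 7) (iv 9) = iv 9"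
  apply (subst refl_rv, simp)
  apply (simp add: iv_simps rv_simps vec3_ops inner_vec3 vec3_eq_iff field_simps)
  by (simp_all add: tau_sq tau_sq2 algebra_simps)?

lemma rt_7_10: "refl (rv 7) (iv 10) = iv 8"
  apply (subst refl_rv, simp)
  apply (simp add: iv_simps rv_simps vec3_ops inner_vec3 vec3_eq_iff field_simps)
  by (simp_all add: tau_sq tau_sq2 algebra_simps)?

lemma rt_7_11: "refl (rv 7) (iv 11) = iv 4"
  apply (subst refl_rv, simp)
  apply (simp add: iv_simps rv_simps vec3_ops inner_vec3 vec3_eq_iff field_simps)
  by (simp_all add: tau_sq tau_sq2 algebra_simps)?

lemma rt_7_12: "refl (rv 7) (iv 12) = iv 3"
  apply (subst refl_rv, simp)
  apply (simp add: iv_simps rv_simps vec3_ops inner_vec3 vec3_eq_iff field_simps)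
  by (simp_all add: tau_sq tau_sq2 algebra_simps)?

lemma rt_7_13: "refl (rv 7) (iv 13) = iv 7"
  apply (subst refl_rv, simp)
  apply (simp add: iv_simps rv_simps vec3_ops inner_vec3 vec3_eq_iff field_simps)
  by (simp_all add: tau_sq tau_sq2 algebra_simps)?

lemma rt_8_2: "refl (rv 8) (iv 2) = iv 12"
  apply (subst refl_rv, simp)
  apply (simp add: iv_simps rv_simps vec3_ops inner_vec3 vec3_eq_iff field_simps)
  by (simp_all add: tau_sq tau_sq2 algebra_simps)?

lemma rt_8_3: "refl (rv 8) (iv 3) = iv 3"
  apply (subst refl_rv, simp)
  apply (simp add: iv_simps rv_simps vec3_ops inner_vec3 vec3_eq_iff field_simps)
  by (simp_all add: tau_sq tau_sq2 algebra_simps)?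

lemma rt_8_4: "refl (rv 8) (iv 4) = iv 4"
  apply (subst refl_rv, simp)
  apply (simp add: iv_simps rv_simps vec3_ops inner_vec3 vec3_eq_iff field_simps)
  by (simp_all add: tau_sq tau_sq2 algebra_simps)?

lemma rt_8_5: "refl (rv 8) (iv 5) = iv 11"
  apply (subst refl_rv, simp)
  apply (simp add: iv_simps rv_simps vec3_ops inner_vec3 vec3_eq_iff field_simps)
  by (simp_all add: tau_sq tau_sq2 algebra_simps)?

lemma rt_8_6: "refl (rv 8) (iv 6) = iv 13"
  apply (subst refl_rv, simp)
  apply (simp add: iv_simps rv_simps vec3_ops inner_vec3 vec3_eq_iff field_simps)
  by (simp_all add: tau_sq tau_sq2 algebra_simps)?

lemma rt_8_7: "refl (rv 8) (iv 7) = iv 7"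
  apply (subst refl_rv, simp)
  apply (simp add: iv_simps rv_simps vec3_ops inner_vec3 vec3_eq_iff field_simps)
  by (simp_all add: tau_sq tau_sq2 algebra_simps)?

lemma rt_8_8: "refl (rv 8) (iv 8) = iv 8"
  apply (subst refl_rv, simp)
  apply (simp add: iv_simps rv_simps vec3_ops inner_vec3 vec3_eq_iff field_simps)
  by (simp_all add: tau_sq tau_sq2 algebra_simps)?

lemma rt_8_9: "refl (rv 8) (iv 9) = iv 10"
  apply (subst refl_rv, simp)
  apply (simp add: iv_simps rv_simps vec3_ops inner_vec3 vec3_eq_iff field_simps)
  by (simp_all add: tau_sq tau_sq2 algebra_simps)?

lemma rt_8_10: "refl (rv 8) (iv 10) = iv 9"
  apply (subst refl_rv, simp)
  apply (simp add: iv_simps rv_simps vec3_ops inner_vec3 vec3_eq_iff field_simps)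
  by (simp_all add: tau_sq tau_sq2 algebra_simps)?

lemma rt_8_11: "refl (rv 8) (iv 11) = iv 5"
  apply (subst refl_rv, simp)
  apply (simp add: iv_simps rv_simps vec3_ops inner_vec3 vec3_eq_iff field_simps)
  by (simp_all add: tau_sq tau_sq2 algebra_simps)?

lemma rt_8_12: "refl (rv 8) (iv 12) = iv 2"
  apply (subst refl_rv, simp)
  apply (simp add: iv_simps rv_simps vec3_ops inner_vec3 vec3_eq_iff field_simps)
  by (simp_all add: tau_sq tau_sq2 algebra_simps)?

lemma rt_8_13: "refl (rv 8) (iv 13) = iv 6"
  apply (subst refl_rv, simp)
  apply (simp add: iv_simps rv_simps vec3_ops inner_vec3 vec3_eq_iff field_simps)
  by (simp_all add: tau_sq tau_sq2 algebra_simps)?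

lemma rt_9_2: "refl (rv 9) (iv 2) = iv 6"
  apply (subst refl_rv, simp)
  apply (simp add: iv_simps rv_simps vec3_ops inner_vec3 vec3_eq_iff field_simps)
  by (simp_all add: tau_sq tau_sq2 algebra_simps)?

lemma rt_9_3: "refl (rv 9) (iv 3) = iv 11"
  apply (subst refl_rv, simp)
  apply (simp add: iv_simps rv_simps vec3_ops inner_vec3 vec3_eq_iff field_simps)
  by (simp_all add: tau_sq tau_sq2 algebra_simps)?

lemma rt_9_4: "refl (rv 9) (iv 4) = iv 12"
  apply (subst refl_rv, simp)
  apply (simp add: iv_simps rv_simps vec3_ops inner_vec3 vec3_eq_iff field_simps)
  by (simp_all add: tau_sq tau_sq2 algebra_simps)?

lemma rt_9_5: "refl (rv 9) (iv 5) = iv 9"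
  apply (subst refl_rv, simp)
  apply (simp add: iv_simps rv_simps vec3_ops inner_vec3 vec3_eq_iff field_simps)
  by (simp_all add: tau_sq tau_sq2 algebra_simps)?

lemma rt_9_6: "refl (rv 9) (iv 6) = iv 2"
  apply (subst refl_rv, simp)
  apply (simp add: iv_simps rv_simps vec3_ops inner_vec3 vec3_eq_iff field_simps)
  by (simp_all add: tau_sq tau_sq2 algebra_simps)?

lemma rt_9_7: "refl (rv 9) (iv 7) = iv 7"
  apply (subst refl_rv, simp)
  apply (simp add: iv_simps rv_simps vec3_ops inner_vec3 vec3_eq_iff field_simps)
  by (simp_all add: tau_sq tau_sq2 algebra_simps)?

lemma rt_9_8: "refl (rv 9) (iv 8) = iv 8"
  apply (subst refl_rv, simp)
  apply (simp add: iv_simps rv_simps vec3_ops inner_vec3 vec3_eq_iff field_simps)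
  by (simp_all add: tau_sq tau_sq2 algebra_simps)?

lemma rt_9_9: "refl (rv 9) (iv 9) = iv 5"
  apply (subst refl_rv, simp)
  apply (simp add: iv_simps rv_simps vec3_ops inner_vec3 vec3_eq_iff field_simps)
  by (simp_all add: tau_sq tau_sq2 algebra_simps)?

lemma rt_9_10: "refl (rv 9) (iv 10) = iv 10"
  apply (subst refl_rv, simp)
  apply (simp add: iv_simps rv_simps vec3_ops inner_vec3 vec3_eq_iff field_simps)
  by (simp_all add: tau_sq tau_sq2 algebra_simps)?

lemma rt_9_11: "refl (rv 9) (iv 11) = iv 3"
  apply (subst refl_rv, simp)
  apply (simp add: iv_simps rv_simps vec3_ops inner_vec3 vec3_eq_iff field_simps)
  by (simp_all add: tau_sq tau_sq2 algebra_simps)?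

lemma rt_9_12: "refl (rv 9) (iv 12) = iv 4"
  apply (subst refl_rv, simp)
  apply (simp add: iv_simps rv_simps vec3_ops inner_vec3 vec3_eq_iff field_simps)
  by (simp_all add: tau_sq tau_sq2 algebra_simps)?

lemma rt_9_13: "refl (rv 9) (iv 13) = iv 13"
  apply (subst refl_rv, simp)
  apply (simp add: iv_simps rv_simps vec3_ops inner_vec3 vec3_eq_iff field_simps)
  by (simp_all add: tau_sq tau_sq2 algebra_simps)?

lemma rt_10_2: "refl (rv 10) (iv 2) = iv 11"
  apply (subst refl_rv, simp)
  apply (simp add: iv_simps rv_simps vec3_ops inner_vec3 vec3_eq_iff field_simps)
  by (simp_all add: tau_sq tau_sq2 algebra_simps)?

lemma rt_10_3: "refl (rv 10) (iv 3) = iv 7"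
  apply (subst refl_rv, simp)
  apply (simp add: iv_simps rv_simps vec3_ops inner_vec3 vec3_eq_iff field_simps)
  by (simp_all add: tau_sq tau_sq2 algebra_simps)?

lemma rt_10_4: "refl (rv 10) (iv 4) = iv 8"
  apply (subst refl_rv, simp)
  apply (simp add: iv_simps rv_simps vec3_ops inner_vec3 vec3_eq_iff field_simps)
  by (simp_all add: tau_sq tau_sq2 algebra_simps)?

lemma rt_10_5: "refl (rv 10) (iv 5) = iv 12"
  apply (subst refl_rv, simp)
  apply (simp add: iv_simps rv_simps vec3_ops inner_vec3 vec3_eq_iff field_simps)
  by (simp_all add: tau_sq tau_sq2 algebra_simps)?

lemma rt_10_6: "refl (rv 10) (iv 6) = iv 6"
  apply (subst refl_rv, simp)
  apply (simp add: iv_simps rv_simps vec3_ops inner_vec3 vec3_eq_iff field_simps)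
  by (simp_all add: tau_sq tau_sq2 algebra_simps)?

lemma rt_10_7: "refl (rv 10) (iv 7) = iv 3"
  apply (subst refl_rv, simp)
  apply (simp add: iv_simps rv_simps vec3_ops inner_vec3 vec3_eq_iff field_simps)
  by (simp_all add: tau_sq tau_sq2 algebra_simps)?

lemma rt_10_8: "refl (rv 10) (iv 8) = iv 4"
  apply (subst refl_rv, simp)
  apply (simp add: iv_simps rv_simps vec3_ops inner_vec3 vec3_eq_iff field_simps)
  by (simp_all add: tau_sq tau_sq2 algebra_simps)?

lemma rt_10_9: "refl (rv 10) (iv 9) = iv 9"
  apply (subst refl_rv, simp)
  apply (simp add: iv_simps rv_simps vec3_ops inner_vec3 vec3_eq_iff field_simps)
  by (simp_all add: tau_sq tau_sq2 algebra_simps)?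

lemma rt_10_10: "refl (rv 10) (iv 10) = iv 10"
  apply (subst refl_rv, simp)
  apply (simp add: iv_simps rv_simps vec3_ops inner_vec3 vec3_eq_iff field_simps)
  by (simp_all add: tau_sq tau_sq2 algebra_simps)?

lemma rt_10_11: "refl (rv 10) (iv 11) = iv 2"
  apply (subst refl_rv, simp)
  apply (simp add: iv_simps rv_simps vec3_ops inner_vec3 vec3_eq_iff field_simps)
  by (simp_all add: tau_sq tau_sq2 algebra_simps)?

lemma rt_10_12: "refl (rv 10) (iv 12) = iv 5"
  apply (subst refl_rv, simp)
  apply (simp add: iv_simps rv_simps vec3_ops inner_vec3 vec3_eq_iff field_simps)
  by (simp_all add: tau_sq tau_sq2 algebra_simps)?

lemma rt_10_13: "refl (rv 10) (iv 13) = iv 13"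
  apply (subst refl_rv, simp)
  apply (simp add: iv_simps rv_simps vec3_ops inner_vec3 vec3_eq_iff field_simps)
  by (simp_all add: tau_sq tau_sq2 algebra_simps)?

lemma rt_11_2: "refl (rv 11) (iv 2) = iv 8"
  apply (subst refl_rv, simp)
  apply (simp add: iv_simps rv_simps vec3_ops inner_vec3 vec3_eq_iff field_simps)
  by (simp_all add: tau_sq tau_sq2 algebra_simps)?

lemma rt_11_3: "refl (rv 11) (iv 3) = iv 13"
  apply (subst refl_rv, simp)
  apply (simp add: iv_simps rv_simps vec3_ops inner_vec3 vec3_eq_iff field_simps)
  by (simp_all add: tau_sq tau_sq2 algebra_simps)?

lemma rt_11_4: "refl (rv 11) (iv 4) = iv 10"
  apply (subst refl_rv, simp)
  apply (simp add: iv_simps rv_simps vec3_ops inner_vec3 vec3_eq_iff field_simps)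
  by (simp_all add: tau_sq tau_sq2 algebra_simps)?

lemma rt_11_5: "refl (rv 11) (iv 5) = iv 7"
  apply (subst refl_rv, simp)
  apply (simp add: iv_simps rv_simps vec3_ops inner_vec3 vec3_eq_iff field_simps)
  by (simp_all add: tau_sq tau_sq2 algebra_simps)?

lemma rt_11_6: "refl (rv 11) (iv 6) = iv 6"
  apply (subst refl_rv, simp)
  apply (simp add: iv_simps rv_simps vec3_ops inner_vec3 vec3_eq_iff field_simps)
  by (simp_all add: tau_sq tau_sq2 algebra_simps)?

lemma rt_11_7: "refl (rv 11) (iv 7) = iv 5"
  apply (subst refl_rv, simp)
  apply (simp add: iv_simps rv_simps vec3_ops inner_vec3 vec3_eq_iff field_simps)
  by (simp_all add: tau_sq tau_sq2 algebra_simps)?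

lemma rt_11_8: "refl (rv 11) (iv 8) = iv 2"
  apply (subst refl_rv, simp)
  apply (simp add: iv_simps rv_simps vec3_ops inner_vec3 vec3_eq_iff field_simps)
  by (simp_all add: tau_sq tau_sq2 algebra_simps)?

lemma rt_11_9: "refl (rv 11) (iv 9) = iv 9"
  apply (subst refl_rv, simp)
  apply (simp add: iv_simps rv_simps vec3_ops inner_vec3 vec3_eq_iff field_simps)
  by (simp_all add: tau_sq tau_sq2 algebra_simps)?

lemma rt_11_10: "refl (rv 11) (iv 10) = iv 4"
  apply (subst refl_rv, simp)
  apply (simp add: iv_simps rv_simps vec3_ops inner_vec3 vec3_eq_iff field_simps)
  by (simp_all add: tau_sq tau_sq2 algebra_simps)?

lemma rt_11_11: "refl (rv 11) (iv 11) = iv 11"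
  apply (subst refl_rv, simp)
  apply (simp add: iv_simps rv_simps vec3_ops inner_vec3 vec3_eq_iff field_simps)
  by (simp_all add: tau_sq tau_sq2 algebra_simps)?

lemma rt_11_12: "refl (rv 11) (iv 12) = iv 12"
  apply (subst refl_rv, simp)
  apply (simp add: iv_simps rv_simps vec3_ops inner_vec3 vec3_eq_iff field_simps)
  by (simp_all add: tau_sq tau_sq2 algebra_simps)?

lemma rt_11_13: "refl (rv 11) (iv 13) = iv 3"
  apply (subst refl_rv, simp)
  apply (simp add: iv_simps rv_simps vec3_ops inner_vec3 vec3_eq_iff field_simps)
  by (simp_all add: tau_sq tau_sq2 algebra_simps)?

lemma rt_12_2: "refl (rv 12) (iv 2) = iv 13"
  apply (subst refl_rv, simp)
  apply (simp add: iv_simps rv_simps vec3_ops inner_vec3 vec3_eq_iff field_simps)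
  by (simp_all add: tau_sq tau_sq2 algebra_simps)?

lemma rt_12_3: "refl (rv 12) (iv 3) = iv 9"
  apply (subst refl_rv, simp)
  apply (simp add: iv_simps rv_simps vec3_ops inner_vec3 vec3_eq_iff field_simps)
  by (simp_all add: tau_sq tau_sq2 algebra_simps)?

lemma rt_12_4: "refl (rv 12) (iv 4) = iv 6"
  apply (subst refl_rv, simp)
  apply (simp add: iv_simps rv_simps vec3_ops inner_vec3 vec3_eq_iff field_simps)
  by (simp_all add: tau_sq tau_sq2 algebra_simps)?

lemma rt_12_5: "refl (rv 12) (iv 5) = iv 10"
  apply (subst refl_rv, simp)
  apply (simp add: iv_simps rv_simps vec3_ops inner_vec3 vec3_eq_iff field_simps)
  by (simp_all add: tau_sq tau_sq2 algebra_simps)?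

lemma rt_12_6: "refl (rv 12) (iv 6) = iv 4"
  apply (subst refl_rv, simp)
  apply (simp add: iv_simps rv_simps vec3_ops inner_vec3 vec3_eq_iff field_simps)
  by (simp_all add: tau_sq tau_sq2 algebra_simps)?

lemma rt_12_7: "refl (rv 12) (iv 7) = iv 7"
  apply (subst refl_rv, simp)
  apply (simp add: iv_simps rv_simps vec3_ops inner_vec3 vec3_eq_iff field_simps)
  by (simp_all add: tau_sq tau_sq2 algebra_simps)?

lemma rt_12_8: "refl (rv 12) (iv 8) = iv 8"
  apply (subst refl_rv, simp)
  apply (simp add: iv_simps rv_simps vec3_ops inner_vec3 vec3_eq_iff field_simps)
  by (simp_all add: tau_sq tau_sq2 algebra_simps)?

lemma rt_12_9: "refl (rv 12) (iv 9) = iv 3"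
  apply (subst refl_rv, simp)
  apply (simp add: iv_simps rv_simps vec3_ops inner_vec3 vec3_eq_iff field_simps)
  by (simp_all add: tau_sq tau_sq2 algebra_simps)?

lemma rt_12_10: "refl (rv 12) (iv 10) = iv 5"
  apply (subst refl_rv, simp)
  apply (simp add: iv_simps rv_simps vec3_ops inner_vec3 vec3_eq_iff field_simps)
  by (simp_all add: tau_sq tau_sq2 algebra_simps)?

lemma rt_12_11: "refl (rv 12) (iv 11) = iv 11"
  apply (subst refl_rv, simp)
  apply (simp add: iv_simps rv_simps vec3_ops inner_vec3 vec3_eq_iff field_simps)
  by (simp_all add: tau_sq tau_sq2 algebra_simps)?

lemma rt_12_12: "refl (rv 12) (iv 12) = iv 12"
  apply (subst refl_rv, simp)
  apply (simp add: iv_simps rv_simps vec3_ops inner_vec3 vec3_eq_iff field_simps)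
  by (simp_all add: tau_sq tau_sq2 algebra_simps)?

lemma rt_12_13: "refl (rv 12) (iv 13) = iv 2"
  apply (subst refl_rv, simp)
  apply (simp add: iv_simps rv_simps vec3_ops inner_vec3 vec3_eq_iff field_simps)
  by (simp_all add: tau_sq tau_sq2 algebra_simps)?

lemma rt_13_2: "refl (rv 13) (iv 2) = iv 2"
  apply (subst refl_rv, simp)
  apply (simp add: iv_simps rv_simps vec3_ops inner_vec3 vec3_eq_iff field_simps)
  by (simp_all add: tau_sq tau_sq2 algebra_simps)?

lemma rt_13_3: "refl (rv 13) (iv 3) = iv 6"
  apply (subst refl_rv, simp)
  apply (simp add: iv_simps rv_simps vec3_ops inner_vec3 vec3_eq_iff field_simps)
  by (simp_all add: tau_sq tau_sq2 algebra_simps)?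

lemma rt_13_4: "refl (rv 13) (iv 4) = iv 9"
  apply (subst refl_rv, simp)
  apply (simp add: iv_simps rv_simps vec3_ops inner_vec3 vec3_eq_iff field_simps)
  by (simp_all add: tau_sq tau_sq2 algebra_simps)?

lemma rt_13_5: "refl (rv 13) (iv 5) = iv 5"
  apply (subst refl_rv, simp)
  apply (simp add: iv_simps rv_simps vec3_ops inner_vec3 vec3_eq_iff field_simps)
  by (simp_all add: tau_sq tau_sq2 algebra_simps)?

lemma rt_13_6: "refl (rv 13) (iv 6) = iv 3"
  apply (subst refl_rv, simp)
  apply (simp add: iv_simps rv_simps vec3_ops inner_vec3 vec3_eq_iff field_simps)
  by (simp_all add: tau_sq tau_sq2 algebra_simps)?

lemma rt_13_7: "refl (rv 13) (iv 7) = iv 11"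
  apply (subst refl_rv, simp)
  apply (simp add: iv_simps rv_simps vec3_ops inner_vec3 vec3_eq_iff field_simps)
  by (simp_all add: tau_sq tau_sq2 algebra_simps)?

lemma rt_13_8: "refl (rv 13) (iv 8) = iv 12"
  apply (subst refl_rv, simp)
  apply (simp add: iv_simps rv_simps vec3_ops inner_vec3 vec3_eq_iff field_simps)
  by (simp_all add: tau_sq tau_sq2 algebra_simps)?

lemma rt_13_9: "refl (rv 13) (iv 9) = iv 4"
  apply (subst refl_rv, simp)
  apply (simp add: iv_simps rv_simps vec3_ops inner_vec3 vec3_eq_iff field_simps)
  by (simp_all add: tau_sq tau_sq2 algebra_simps)?

lemma rt_13_10: "refl (rv 13) (iv 10) = iv 10"
  apply (subst refl_rv, simp)
  apply (simp add: iv_simps rv_simps vec3_ops inner_vec3 vec3_eq_iff field_simps)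
  by (simp_all add: tau_sq tau_sq2 algebra_simps)?

lemma rt_13_11: "refl (rv 13) (iv 11) = iv 7"
  apply (subst refl_rv, simp)
  apply (simp add: iv_simps rv_simps vec3_ops inner_vec3 vec3_eq_iff field_simps)
  by (simp_all add: tau_sq tau_sq2 algebra_simps)?

lemma rt_13_12: "refl (rv 13) (iv 12) = iv 8"
  apply (subst refl_rv, simp)
  apply (simp add: iv_simps rv_simps vec3_ops inner_vec3 vec3_eq_iff field_simps)
  by (simp_all add: tau_sq tau_sq2 algebra_simps)?

lemma rt_13_13: "refl (rv 13) (iv 13) = iv 13"
  apply (subst refl_rv, simp)
  apply (simp add: iv_simps rv_simps vec3_ops inner_vec3 vec3_eq_iff field_simps)
  by (simp_all add: tau_sq tau_sq2 algebra_simps)?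

lemma rt_14_2: "refl (rv 14) (iv 2) = iv 9"
  apply (subst refl_rv, simp)
  apply (simp add: iv_simps rv_simps vec3_ops inner_vec3 vec3_eq_iff field_simps)
  by (simp_all add: tau_sq tau_sq2 algebra_simps)?

lemma rt_14_3: "refl (rv 14) (iv 3) = iv 3"
  apply (subst refl_rv, simp)
  apply (simp add: iv_simps rv_simps vec3_ops inner_vec3 vec3_eq_iff field_simps)
  by (simp_all add: tau_sq tau_sq2 algebra_simps)?

lemma rt_14_4: "refl (rv 14) (iv 4) = iv 4"
  apply (subst refl_rv, simp)
  apply (simp add: iv_simps rv_simps vec3_ops inner_vec3 vec3_eq_iff field_simps)
  by (simp_all add: tau_sq tau_sq2 algebra_simps)?

lemma rt_14_5: "refl (rv 14) (iv 5) = iv 6"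
  apply (subst refl_rv, simp)
  apply (simp add: iv_simps rv_simps vec3_ops inner_vec3 vec3_eq_iff field_simps)
  by (simp_all add: tau_sq tau_sq2 algebra_simps)?

lemma rt_14_6: "refl (rv 14) (iv 6) = iv 5"
  apply (subst refl_rv, simp)
  apply (simp add: iv_simps rv_simps vec3_ops inner_vec3 vec3_eq_iff field_simps)
  by (simp_all add: tau_sq tau_sq2 algebra_simps)?

lemma rt_14_7: "refl (rv 14) (iv 7) = iv 10"
  apply (subst refl_rv, simp)
  apply (simp add: iv_simps rv_simps vec3_ops inner_vec3 vec3_eq_iff field_simps)
  by (simp_all add: tau_sq tau_sq2 algebra_simps)?

lemma rt_14_8: "refl (rv 14) (iv 8) = iv 13"
  apply (subst refl_rv, simp)
  apply (simp add: iv_simps rv_simps vec3_ops inner_vec3 vec3_eq_iff field_simps)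
  by (simp_all add: tau_sq tau_sq2 algebra_simps)?

lemma rt_14_9: "refl (rv 14) (iv 9) = iv 2"
  apply (subst refl_rv, simp)
  apply (simp add: iv_simps rv_simps vec3_ops inner_vec3 vec3_eq_iff field_simps)
  by (simp_all add: tau_sq tau_sq2 algebra_simps)?

lemma rt_14_10: "refl (rv 14) (iv 10) = iv 7"
  apply (subst refl_rv, simp)
  apply (simp add: iv_simps rv_simps vec3_ops inner_vec3 vec3_eq_iff field_simps)
  by (simp_all add: tau_sq tau_sq2 algebra_simps)?

lemma rt_14_11: "refl (rv 14) (iv 11) = iv 11"
  apply (subst refl_rv, simp)
  apply (simp add: iv_simps rv_simps vec3_ops inner_vec3 vec3_eq_iff field_simps)
  by (simp_all add: tau_sq tau_sq2 algebra_simps)?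

lemma rt_14_12: "refl (rv 14) (iv 12) = iv 12"
  apply (subst refl_rv, simp)
  apply (simp add: iv_simps rv_simps vec3_ops inner_vec3 vec3_eq_iff field_simps)
  by (simp_all add: tau_sq tau_sq2 algebra_simps)?

lemma rt_14_13: "refl (rv 14) (iv 13) = iv 8"
  apply (subst refl_rv, simp)
  apply (simp add: iv_simps rv_simps vec3_ops inner_vec3 vec3_eq_iff field_simps)
  by (simp_all add: tau_sq tau_sq2 algebra_simps)?

lemma rt_15_2: "refl (rv 15) (iv 2) = iv 7"
  apply (subst refl_rv, simp)
  apply (simp add: iv_simps rv_simps vec3_ops inner_vec3 vec3_eq_iff field_simps)
  by (simp_all add: tau_sq tau_sq2 algebra_simps)?

lemma rt_15_3: "refl (rv 15) (iv 3) = iv 3"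
  apply (subst refl_rv, simp)
  apply (simp add: iv_simps rv_simps vec3_ops inner_vec3 vec3_eq_iff field_simps)
  by (simp_all add: tau_sq tau_sq2 algebra_simps)?

lemma rt_15_4: "refl (rv 15) (iv 4) = iv 4"
  apply (subst refl_rv, simp)
  apply (simp add: iv_simps rv_simps vec3_ops inner_vec3 vec3_eq_iff field_simps)
  by (simp_all add: tau_sq tau_sq2 algebra_simps)?

lemma rt_15_5: "refl (rv 15) (iv 5) = iv 8"
  apply (subst refl_rv, simp)
  apply (simp add: iv_simps rv_simps vec3_ops inner_vec3 vec3_eq_iff field_simps)
  by (simp_all add: tau_sq tau_sq2 algebra_simps)?

lemma rt_15_6: "refl (rv 15) (iv 6) = iv 11"
  apply (subst refl_rv, simp)
  apply (simp add: iv_simps rv_simps vec3_ops inner_vec3 vec3_eq_iff field_simps)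
  by (simp_all add: tau_sq tau_sq2 algebra_simps)?

lemma rt_15_7: "refl (rv 15) (iv 7) = iv 2"
  apply (subst refl_rv, simp)
  apply (simp add: iv_simps rv_simps vec3_ops inner_vec3 vec3_eq_iff field_simps)
  by (simp_all add: tau_sq tau_sq2 algebra_simps)?

lemma rt_15_8: "refl (rv 15) (iv 8) = iv 5"
  apply (subst refl_rv, simp)
  apply (simp add: iv_simps rv_simps vec3_ops inner_vec3 vec3_eq_iff field_simps)
  by (simp_all add: tau_sq tau_sq2 algebra_simps)?

lemma rt_15_9: "refl (rv 15) (iv 9) = iv 12"
  apply (subst refl_rv, simp)
  apply (simp add: iv_simps rv_simps vec3_ops inner_vec3 vec3_eq_iff field_simps)
  by (simp_all add: tau_sq tau_sq2 algebra_simps)?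

lemma rt_15_10: "refl (rv 15) (iv 10) = iv 10"
  apply (subst refl_rv, simp)
  apply (simp add: iv_simps rv_simps vec3_ops inner_vec3 vec3_eq_iff field_simps)
  by (simp_all add: tau_sq tau_sq2 algebra_simps)?

lemma rt_15_11: "refl (rv 15) (iv 11) = iv 6"
  apply (subst refl_rv, simp)
  apply (simp add: iv_simps rv_simps vec3_ops inner_vec3 vec3_eq_iff field_simps)
  by (simp_all add: tau_sq tau_sq2 algebra_simps)?

lemma rt_15_12: "refl (rv 15) (iv 12) = iv 9"
  apply (subst refl_rv, simp)
  apply (simp add: iv_simps rv_simps vec3_ops inner_vec3 vec3_eq_iff field_simps)
  by (simp_all add: tau_sq tau_sq2 algebra_simps)?

lemma rt_15_13: "refl (rv 15) (iv 13) = iv 13"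
  apply (subst refl_rv, simp)
  apply (simp add: iv_simps rv_simps vec3_ops inner_vec3 vec3_eq_iff field_simps)
  by (simp_all add: tau_sq tau_sq2 algebra_simps)?

lemma rt_16_2: "refl (rv 16) (iv 2) = iv 2"
  apply (subst refl_rv, simp)
  apply (simp add: iv_simps rv_simps vec3_ops inner_vec3 vec3_eq_iff field_simps)
  by (simp_all add: tau_sq tau_sq2 algebra_simps)?

lemma rt_16_3: "refl (rv 16) (iv 3) = iv 8"
  apply (subst refl_rv, simp)
  apply (simp add: iv_simps rv_simps vec3_ops inner_vec3 vec3_eq_iff field_simps)
  by (simp_all add: tau_sq tau_sq2 algebra_simps)?

lemma rt_16_4: "refl (rv 16) (iv 4) = iv 7"
  apply (subst refl_rv, simp)
  apply (simp add: iv_simps rv_simps vec3_ops inner_vec3 vec3_eq_iff field_simps)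
  by (simp_all add: tau_sq tau_sq2 algebra_simps)?

lemma rt_16_5: "refl (rv 16) (iv 5) = iv 5"
  apply (subst refl_rv, simp)
  apply (simp add: iv_simps rv_simps vec3_ops inner_vec3 vec3_eq_iff field_simps)
  by (simp_all add: tau_sq tau_sq2 algebra_simps)?

lemma rt_16_6: "refl (rv 16) (iv 6) = iv 10"
  apply (subst refl_rv, simp)
  apply (simp add: iv_simps rv_simps vec3_ops inner_vec3 vec3_eq_iff field_simps)
  by (simp_all add: tau_sq tau_sq2 algebra_simps)?

lemma rt_16_7: "refl (rv 16) (iv 7) = iv 4"
  apply (subst refl_rv, simp)
  apply (simp add: iv_simps rv_simps vec3_ops inner_vec3 vec3_eq_iff field_simps)
  by (simp_all add: tau_sq tau_sq2 algebra_simps)?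

lemma rt_16_8: "refl (rv 16) (iv 8) = iv 3"
  apply (subst refl_rv, simp)
  apply (simp add: iv_simps rv_simps vec3_ops inner_vec3 vec3_eq_iff field_simps)
  by (simp_all add: tau_sq tau_sq2 algebra_simps)?

lemma rt_16_9: "refl (rv 16) (iv 9) = iv 13"
  apply (subst refl_rv, simp)
  apply (simp add: iv_simps rv_simps vec3_ops inner_vec3 vec3_eq_iff field_simps)
  by (simp_all add: tau_sq tau_sq2 algebra_simps)?

lemma rt_16_10: "refl (rv 16) (iv 10) = iv 6"
  apply (subst refl_rv, simp)
  apply (simp add: iv_simps rv_simps vec3_ops inner_vec3 vec3_eq_iff field_simps)
  by (simp_all add: tau_sq tau_sq2 algebra_simps)?

lemma rt_16_11: "refl (rv 16) (iv 11) = iv 11"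
  apply (subst refl_rv, simp)
  apply (simp add: iv_simps rv_simps vec3_ops inner_vec3 vec3_eq_iff field_simps)
  by (simp_all add: tau_sq tau_sq2 algebra_simps)?

lemma rt_16_12: "refl (rv 16) (iv 12) = iv 12"
  apply (subst refl_rv, simp)
  apply (simp add: iv_simps rv_simps vec3_ops inner_vec3 vec3_eq_iff field_simps)
  by (simp_all add: tau_sq tau_sq2 algebra_simps)?

lemma rt_16_13: "refl (rv 16) (iv 13) = iv 9"
  apply (subst refl_rv, simp)
  apply (simp add: iv_simps rv_simps vec3_ops inner_vec3 vec3_eq_iff field_simps)
  by (simp_all add: tau_sq tau_sq2 algebra_simps)?

lemmas refl_table = rt_2_2 rt_2_3 rt_2_4 rt_2_5 rt_2_6 rt_2_7 rt_2_8 rt_2_9 rt_2_10 rt_2_11 rt_2_12 rt_2_13 rt_3_2 rt_3_3 rt_3_4 rt_3_5 rt_3_6 rt_3_7 rt_3_8 rt_3_9 rt_3_10 rt_3_11 rt_3_12 rt_3_13 rt_4_2 rt_4_3 rt_4_4 rt_4_5 rt_4_6 rt_4_7 rt_4_8 rt_4_9 rt_4_10 rt_4_11 rt_4_12 rt_4_13 rt_5_2 rt_5_3 rt_5_4 rt_5_5 rt_5_6 rt_5_7 rt_5_8 rt_5_9 rt_5_10 rt_5_11 rt_5_12 rt_5_13 rt_6_2 rt_6_3 rt_6_4 rt_6_5 rt_6_6 rt_6_7 rt_6_8 rt_6_9 rt_6_10 rt_6_11 rt_6_12 rt_6_13 rt_7_2 rt_7_3 rt_7_4 rt_7_5 rt_7_6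 rt_7_7 rt_7_8 rt_7_9 rt_7_10 rt_7_11 rt_7_12 rt_7_13 rt_8_2 rt_8_3 rt_8_4 rt_8_5 rt_8_6 rt_8_7 rt_8_8 rt_8_9 rt_8_10 rt_8_11 rt_8_12 rt_8_13 rt_9_2 rt_9_3 rt_9_4 rt_9_5 rt_9_6 rt_9_7 rt_9_8 rt_9_9 rt_9_10 rt_9_11 rt_9_12 rt_9_13 rt_10_2 rt_10_3 rt_10_4 rt_10_5 rt_10_6 rt_10_7 rt_10_8 rt_10_9 rt_10_10 rt_10_11 rt_10_12 rt_10_13 rt_11_2 rt_11_3 rt_11_4 rt_11_5 rt_11_6 rt_11_7 rt_11_8 rt_11_9 rt_11_10 rt_11_11 rt_11_12 rt_11_13 rt_12_2 rt_12_3 rt_12_4 rt_12_5 rt_12_6 rt_12_7 rt_12_8 rt_12_9 rt_12_10 rt_12_11 rt_12_12 rt_12_13 rt_13_2 rt_13_3 rt_13_4 rt_13_5 rt_13_6 rt_13_7 rt_13_8 rt_13_9 rt_13_10 rt_13_11 rt_13_12 rt_13_13 rt_14_2 rt_14_3 rt_14_4 rt_14_5 rt_14_6 rt_14_7 rt_14_8 rt_14_9 rt_14_10 rt_14_11 rt_14_12 rt_14_13 rt_15_2 rt_15_3 rt_15_4 rt_15_5 rt_15_6 rt_15_7 rt_15_8 rt_15_9 rt_15_10 rt_15_11 rt_15_12 rt_15_13 rt_16_2 rt_16_3 rt_16_4 rt_16_5 rt_16_6 rt_16_7 rt_16_8 rt_16_9 rt_16_10 rt_16_11 rt_16_12 r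t_16_13

lemma neg_2: "- iv 2 = iv 5"
  by (simp add: iv_simps vec3_ops)

lemma neg_3: "- iv 3 = iv 4"
  by (simp add: iv_simps vec3_ops)

lemma neg_4: "- iv 4 = iv 3"
  by (simp add: iv_simps vec3_ops)

lemma neg_5: "- iv 5 = iv 2"
  by (simp add: iv_simps vec3_ops)

lemma neg_6: "- iv 6 = iv 9"
  by (simp add: iv_simps vec3_ops)

lemma neg_7: "- iv 7 = iv 8"
  by (simp add: iv_simps vec3_ops)

lemma neg_8: "- iv 8 = iv 7"
  by (simp add: iv_simps vec3_ops)

lemma neg_9: "- iv 9 = iv 6"
  by (simp add: iv_simps vec3_ops)

lemma neg_10: "- iv 10 = iv 13"
  by (simp add: iv_simps vec3_ops)

lemma neg_11: "- iv 11 = iv 12"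
  by (simp add: iv_simps vec3_ops)

lemma neg_12: "- iv 12 = iv 11"
  by (simp add: iv_simps vec3_ops)

lemma neg_13: "- iv 13 = iv 10"
  by (simp add: iv_simps vec3_ops)

lemmas neg_table = neg_2 neg_3 neg_4 neg_5 neg_6 neg_7 neg_8 neg_9 neg_10 neg_11 neg_12 neg_13


lemma comp4: "{f s t | s t. s \<in> {-1,1::real} \<and> t \<in> {-1,1::real}} = {f (-1) (-1), f (-1) 1, f 1 (-1), f 1 1}"
  by auto
lemma comp2: "{f s | s. s \<in> {-1,1::real}} = {f (-1), f 1}"
  by auto
lemma I_set: "{2..<14} = {2,3,4,5,6,7,8,9,10,11,12,13::nat}" by (auto; presburger)
lemma R_set: "{2..<17} = {2,3,4,5,6,7,8,9,10,11,12,13,14,15,16::nat}" by (auto; presburger)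

lemma Icos_iv: "Icos = iv ` {2..<14}"
  unfolding Icos_def I_set comp4 by (simp add: iv_simps insert_commute)

lemma Rplus_rv: "Rplus = rv ` {2..<17}"
  unfolding Rplus_def R_set comp4 comp2 by (simp add: rv_simps inv_tau insert_commute)

lemma inj_iv: "inj_on iv {2..<14}"
proof -
  have "distinct Ilist" unfolding Ilist_def using tau_bounds by (simp add: vec3_eq_iff)
  then show ?thesis unfolding iv_def inj_on_def by (auto simp: Ilist_def nth_eq_iff_index_eq)
qed

lemma inj_rv: "inj_on rv {2..<17}"
proof -
  have "distinct Rlist" unfolding Rlist_def using tau_bounds by (simp add: vec3_eq_iff)
  then show ?thesis unfolding rv_def inj_on_def by (auto simp: Rlist_def nth_eq_iff_index_eq)
qed
lemma refl_Icos: assumes "v \<in> Rplus" "y \<in> Icos" shows "refl v y \<in> Icos"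
proof -
  obtain i j where ij: "i \<in> {2..<17}" "j \<in> {2..<14}" "v = rv i" "y = iv j"
    using assms unfolding Rplus_rv Icos_iv by auto
  show ?thesis using Ridx[OF ij(1)] Iidx[OF ij(2)] unfolding ij(3,4) Icos_iv
    by (elim disjE; simp add: refl_table)
qed

lemma neg_Icos: assumes "y \<in> Icos" shows "- y \<in> Icos"
proof -
  obtain j where j: "j \<in> {2..<14}" "y = iv j"
    using assms unfolding Icos_iv by auto
  show ?thesis using Iidx[OF j(1)] unfolding j(2) Icos_iv
    by (elim disjE; simp add: neg_table)
qed

lemma sum_Rplus: "(\<Sum>v\<in>Rplus. f v) = (\<Sum>i\<in>{2..<17}. f (rv i))"
  unfolding Rplus_rv by (simp add: sum.reindex inj_rv)

lemma sum_Icos: "(\<Sum>v\<in>Icos. f v) = (\<Sum>i\<in>{2..<14}. f (iv i))"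
  unfolding Icos_iv by (simp add: sum.reindex inj_iv)


lemma G3_2: fixes h :: "real^3 \<Rightarrow> real" shows "(\<Sum>v\<in>Rplus. h (iv 2) - h (refl v (iv 2))) = 11 * h (iv 2) + h (- iv 2) - (\<Sum>y\<in>Icos. h y)"
  unfolding sum_Rplus sum_Icos R_set I_set by (simp add: refl_table neg_table; linarith?)

lemma G3_3: fixes h :: "real^3 \<Rightarrow> real" shows "(\<Sum>v\<in>Rplus. h (iv 3) - h (refl v (iv 3))) = 11 * h (iv 3) + h (- iv 3) - (\<Sum>y\<in>Icos. h y)"
  unfolding sum_Rplus sum_Icos R_set I_set by (simp add: refl_table neg_table; linarith?)

lemma G3_4: fixes h :: "real^3 \<Rightarrow> real" shows "(\<Sum>v\<in>Rplus. h (iv 4) - h (refl v (iv 4))) = 11 * h (iv 4) + h (- iv 4) - (\<Sum>y\<in>Icos. h y)"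
  unfolding sum_Rplus sum_Icos R_set I_set by (simp add: refl_table neg_table; linarith?)

lemma G3_5: fixes h :: "real^3 \<Rightarrow> real" shows "(\<Sum>v\<in>Rplus. h (iv 5) - h (refl v (iv 5))) = 11 * h (iv 5) + h (- iv 5) - (\<Sum>y\<in>Icos. h y)"
  unfolding sum_Rplus sum_Icos R_set I_set by (simp add: refl_table neg_table; linarith?)

lemma G3_6: fixes h :: "real^3 \<Rightarrow> real" shows "(\<Sum>v\<in>Rplus. h (iv 6) - h (refl v (iv 6))) = 11 * h (iv 6) + h (- iv 6) - (\<Sum>y\<in>Icos. h y)"
  unfolding sum_Rplus sum_Icos R_set I_set by (simp add: refl_table neg_table; linarith?)

lemma G3_7: fixes h :: "real^3 \<Rightarrow> real" shows "(\<Sum>v\<in>Rplus. h (iv 7) - h (refl v (iv 7))) = 11 * h (iv 7) + h (- iv 7) - (\<Sum>y\<in>Icos. h y)"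
  unfolding sum_Rplus sum_Icos R_set I_set by (simp add: refl_table neg_table; linarith?)

lemma G3_8: fixes h :: "real^3 \<Rightarrow> real" shows "(\<Sum>v\<in>Rplus. h (iv 8) - h (refl v (iv 8))) = 11 * h (iv 8) + h (- iv 8) - (\<Sum>y\<in>Icos. h y)"
  unfolding sum_Rplus sum_Icos R_set I_set by (simp add: refl_table neg_table; linarith?)

lemma G3_9: fixes h :: "real^3 \<Rightarrow> real" shows "(\<Sum>v\<in>Rplus. h (iv 9) - h (refl v (iv 9))) = 11 * h (iv 9) + h (- iv 9) - (\<Sum>y\<in>Icos. h y)"
  unfolding sum_Rplus sum_Icos R_set I_set by (simp add: refl_table neg_table; linarith?)

lemma G3_10: fixes h :: "real^3 \<Rightarrow> real" shows "(\<Sum>v\<in>Rplus. h (iv 10) - h (refl v (iv 10))) = 11 * h (iv 10) + h (- iv 10) - (\<Sum>y\<in>Icos. h y)"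
  unfolding sum_Rplus sum_Icos R_set I_set by (simp add: refl_table neg_table; linarith?)

lemma G3_11: fixes h :: "real^3 \<Rightarrow> real" shows "(\<Sum>v\<in>Rplus. h (iv 11) - h (refl v (iv 11))) = 11 * h (iv 11) + h (- iv 11) - (\<Sum>y\<in>Icos. h y)"
  unfolding sum_Rplus sum_Icos R_set I_set by (simp add: refl_table neg_table; linarith?)

lemma G3_12: fixes h :: "real^3 \<Rightarrow> real" shows "(\<Sum>v\<in>Rplus. h (iv 12) - h (refl v (iv 12))) = 11 * h (iv 12) + h (- iv 12) - (\<Sum>y\<in>Icos. h y)"
  unfolding sum_Rplus sum_Icos R_set I_set by (simp add: refl_table neg_table; linarith?)

lemma G3_13: fixes h :: "real^3 \<Rightarrow> real" shows "(\<Sum>v\<in>Rplus. h (iv 13) - h (refl v (iv 13))) = 11 * h (iv 13) + h (- iv 13) - (\<Sum>y\<in>Icos. h y)"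
  unfolding sum_Rplus sum_Icos R_set I_set by (simp add: refl_table neg_table; linarith?)

lemma G3: fixes h :: "real^3 \<Rightarrow> real" assumes "y0 \<in> Icos"
  shows "(\<Sum>v\<in>Rplus. h y0 - h (refl v y0)) = 11 * h y0 + h (- y0) - (\<Sum>y\<in>Icos. h y)"
proof -
  obtain j where j: "j \<in> {2..<14}" "y0 = iv j"
    using assms unfolding Icos_iv by auto
  show ?thesis using Iidx[OF j(1)] unfolding j(2)
    by (elim disjE; simp only: G3_2 G3_3 G3_4 G3_5 G3_6 G3_7 G3_8 G3_9 G3_10 G3_11 G3_12 G3_13)
qed



lemma mono3_simp: "mono3 (i,j,k) x = (x$1)^i * (x$2)^j * (x$3)^k"
  by (simp add: mono3_def)

lemma homog3_poly3: "homog3 n p \<Longrightarrow> poly3 p"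
  unfolding homog3_def poly3_def by blast

lemma homog3_scale:
  assumes "homog3 n p" shows "p (c *\<^sub>R x) = c^n * p x"
proof -
  obtain S d where S: "finite S" "\<forall>(i,j,k)\<in>S. i + j + k = n" "p = (\<lambda>x. \<Sum>a\<in>S. d a * mono3 a x)"
    using assms unfolding homog3_def by blast
  have "mono3 a (c *\<^sub>R x) = c^n * mono3 a x" if "a \<in> S" for a
  proof -
    obtain i j k where a: "a = (i,j,k)" by (cases a) auto
    with S(2) that have "i + j + k = n" by auto
    then show ?thesis unfolding a mono3_simp
      by (auto simp: power_mult_distrib power_add)
  qed
  then show ?thesis unfolding S(3) by (simp add: sum_distrib_left algebra_simps)
qed

lemma vec_nth_differentiable: "(\<lambda>x::real^3. x $ i) differentiable (at x)"
  by (rule bounded_linear_imp_differentiable[OF bounded_linear_vec_nth])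

lemma vec_nth_continuous: "continuous_on UNIV (\<lambda>x::real^3. x $ i)"
  by (rule linear_continuous_on[OF bounded_linear_vec_nth])

lemma mono3_differentiable: "mono3 a differentiable (at x)"
proof -
  obtain i j k where a: "a = (i,j,k)" by (cases a) auto
  have "(\<lambda>x. (x$1)^i * (x$2)^j * (x$3)^k) differentiable (at x)"
    by (intro differentiable_mult differentiable_power vec_nth_differentiable)
  then show ?thesis unfolding a by (simp add: mono3_simp[abs_def])
qed

lemma mono3_continuous: "continuous_on UNIV (mono3 a)"
proof -
  obtain i j k where a: "a = (i,j,k)" by (cases a) auto
  have "continuous_on UNIV (\<lambda>x::real^3. (x$1)^i * (x$2)^j * (x$3)^k)"
    by (intro continuous_intros vec_nth_continuous)
  then show ?thesis unfolding a by (simp add: mono3_simp[abs_def])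
qed

lemma poly3_differentiable: "poly3 p \<Longrightarrow> p differentiable (at x)"
  unfolding poly3_def
  by (auto intro!: differentiable_sum differentiable_mult mono3_differentiable)

lemma poly3_continuous: "poly3 p \<Longrightarrow> continuous_on UNIV p"
  unfolding poly3_def
  by (auto intro!: continuous_on_sum continuous_on_mult continuous_on_const mono3_continuous)

lemma axis_sum3: "(\<Sum>i\<in>UNIV. (u $ i) *\<^sub>R axis i (1::real)) = (u::real^3)"
  by (simp add: sum_3 vec_eq_iff forall_3 axis_def)

lemma line_deriv:
  assumes "(p has_derivative D) (at x)"
  shows "((\<lambda>t. p (x + t *\<^sub>R e)) has_real_derivative D e) (at 0)"
proof -
  have l: "((\<lambda>t::real. x + t *\<^sub>R e) has_derivative (\<lambda>t. t *\<^sub>R e)) (at 0)"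
    by (auto intro!: derivative_eq_intros)
  have "((\<lambda>t. p (x + t *\<^sub>R e)) has_derivative (\<lambda>t. D (t *\<^sub>R e))) (at 0)"
    using has_derivative_compose[OF l, of p D] assms by simp
  moreover have "D (t *\<^sub>R e) = t * D e" for t
    using assms by (simp add: has_derivative_def linear_scale bounded_linear.linear)
  ultimately have "((\<lambda>t. p (x + t *\<^sub>R e)) has_derivative (\<lambda>t. t * D e)) (at 0)"
    by simp
  then show ?thesis
    by (simp add: has_field_derivative_def mult_commute_abs)
qed

lemma dirderiv_D:
  assumes "(p has_derivative D) (at x)"
  shows "dirderiv u p x = D u"
proof -
  have "partial i p x = D (axis i 1)" for i
    unfolding partial_def by (rule DERIV_imp_deriv[OF line_deriv[OF assms]])
  then have "dirderiv u p x = (\<Sum>i\<in>UNIV. u $ i * D (axis i 1))"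
    by (simp add: dirderiv_def)
  also have "\<dots> = D (\<Sum>i\<in>UNIV. (u $ i) *\<^sub>R axis i 1)"
    using assms unfolding has_derivative_def
    by (simp add: linear_sum linear_scale bounded_linear.linear)
  finally show ?thesis by (simp add: axis_sum3)
qed

lemma euler:
  assumes h: "homog3 n p" and d: "(p has_derivative D) (at x)"
  shows "D x = real n * p x"
proof -
  have 1: "((\<lambda>t. p (x + t *\<^sub>R x)) has_real_derivative D x) (at 0)"
    by (rule line_deriv[OF d])
  have e: "p (x + t *\<^sub>R x) = (1 + t)^n * p x" for t
    using homog3_scale[OF h, of "1 + t" x] by (simp add: algebra_simps)
  have 2: "((\<lambda>t. (1 + t)^n * p x) has_real_derivative real n * p x) (at 0)"
    by (auto intro!: derivative_eq_intros)
  show ?thesis using DERIV_unique[OF 1 2[folded e]] .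
qed

lemma homog3_const1: "homog3 0 (\<lambda>x. 1)"
  unfolding homog3_def
  by (rule exI[of _ "{(0,0,0)}"], rule exI[of _ "\<lambda>_. 1"]) (simp add: mono3_simp)

lemma homog3_add:
  assumes "homog3 n p" "homog3 n q" shows "homog3 n (\<lambda>x. p x + q x)"
proof -
  obtain S c where S: "finite S" "\<forall>(i,j,k)\<in>S. i + j + k = n" "p = (\<lambda>x. \<Sum>a\<in>S. c a * mono3 a x)"
    using assms(1) unfolding homog3_def by blast
  obtain T d where T: "finite T" "\<forall>(i,j,k)\<in>T. i + j + k = n" "q = (\<lambda>x. \<Sum>a\<in>T. d a * mono3 a x)"
    using assms(2) unfolding homog3_def by blast
  define e where "e a = (if a \<in> S then c a else 0) + (if a \<in> T then d a else 0)" for a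
  have "(\<Sum>a\<in>S \<union> T. e a * mono3 a x) = p x + q x" for x
  proof -
    have "e a * mono3 a x = (if a \<in> S then c a * mono3 a x else 0) + (if a \<in> T then d a * mono3 a x else 0)" for a
      unfolding e_def by (simp add: algebra_simps)
    then have "(\<Sum>a\<in>S \<union> T. e a * mono3 a x) = (\<Sum>a\<in>S \<union> T. (if a \<in> S then c a * mono3 a x else 0))
       + (\<Sum>a\<in>S \<union> T. (if a \<in> T then d a * mono3 a x else 0))"
      by (simp add: sum.distrib[symmetric])
    also have "(\<Sum>a\<in>S \<union> T. (if a \<in> S then c a * mono3 a x else 0)) = p x"
      using S T by (simp add: sum.If_cases Int_absorb1)
    also have "(\<Sum>a\<in>S \<union> T. (if a \<in> T then d a * mono3 a x else 0)) = q x"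
      using S T by (simp add: sum.If_cases Int_absorb1)
    finally show ?thesis .
  qed
  then show ?thesis unfolding homog3_def using S T
    by (intro exI[of _ "S \<union> T"] exI[of _ e]) auto
qed

lemma homog3_cmult:
  assumes "homog3 n p" shows "homog3 n (\<lambda>x. r * p x)"
proof -
  obtain S c where S: "finite S" "\<forall>(i,j,k)\<in>S. i + j + k = n" "p = (\<lambda>x. \<Sum>a\<in>S. c a * mono3 a x)"
    using assms(1) unfolding homog3_def by blast
  then show ?thesis unfolding homog3_def
    by (intro exI[of _ S] exI[of _ "\<lambda>a. r * c a"]) (auto simp: sum_distrib_left algebra_simps)
qed

lemma homog3_mult_coord:
  assumes "homog3 n p" shows "homog3 (Suc n) (\<lambda>x. x $ l * p x)"
proof -
  obtain S c where S: "finite S" "\<forall>(i,j,k)\<in>S. i + j + k = n" "p = (\<lambda>x. \<Sum>a\<in>S. c a * mono3 a x)"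
    using assms(1) unfolding homog3_def by blast
  define sh :: "nat \<times> nat \<times> nat \<Rightarrow> nat \<times> nat \<times> nat" where
    "sh = (\<lambda>(i,j,k). if l = 1 then (Suc i, j, k) else if l = 2 then (i, Suc j, k) else (i, j, Suc k))"
  have inj: "inj sh" unfolding sh_def inj_def by auto
  have m: "mono3 (sh a) x = x $ l * mono3 a x" for a x
  proof -
    obtain i j k where a: "a = (i,j,k)" by (cases a) auto
    have "l = 1 \<or> l = 2 \<or> l = 3" using exhaust_3 by blast
    then show ?thesis unfolding a sh_def by (auto simp: mono3_simp)
  qed
  have "(\<lambda>x. x $ l * p x) = (\<lambda>x. \<Sum>b\<in>sh ` S. c (inv sh b) * mono3 b x)"
  proof
    fix x
    have "(\<Sum>b\<in>sh ` S. c (inv sh b) * mono3 b x) = (\<Sum>a\<in>S. c (inv sh (sh a)) * mono3 (sh a) x)"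
      by (rule sum.reindex_cong[OF inj_on_subset[OF inj subset_UNIV] refl]) simp
    also have "\<dots> = (\<Sum>a\<in>S. x $ l * (c a * mono3 a x))"
      by (simp add: inv_f_f[OF inj] m algebra_simps)
    finally show "x $ l * p x = (\<Sum>b\<in>sh ` S. c (inv sh b) * mono3 b x)"
      unfolding S(3) by (simp add: sum_distrib_left)
  qed
  moreover have "\<forall>(i,j,k)\<in>sh ` S. i + j + k = Suc n"
    using S(2) unfolding sh_def by (auto split: if_splits)
  ultimately show ?thesis unfolding homog3_def using S(1)
    by (intro exI[of _ "sh ` S"] exI[of _ "\<lambda>b. c (inv sh b)"]) auto
qed

lemma homog3_mult_lin:
  assumes "homog3 n p" shows "homog3 (Suc n) (\<lambda>x. (x \<bullet> y) * p x)"
proof -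
  have "(\<lambda>x. (x \<bullet> y) * p x) = (\<lambda>x. (y$1 * (x$1 * p x) + y$2 * (x$2 * p x)) + y$3 * (x$3 * p x))"
    by (auto simp: inner_vec_def sum_3 algebra_simps)
  then show ?thesis
    by (simp only:) (intro homog3_add homog3_cmult homog3_mult_coord assms)
qed

lemma homog3_inner_pow: "homog3 n (\<lambda>x. (x \<bullet> y) ^ n)"
proof (induction n)
  case 0 then show ?case using homog3_const1 by simp
next
  case (Suc n)
  have "homog3 (Suc n) (\<lambda>x. (x \<bullet> y) * (x \<bullet> y) ^ n)"
    by (rule homog3_mult_lin[OF Suc])
  then show ?case by simp
qed

lemma dirderiv_inner_pow:
  "dirderiv u (\<lambda>z. (z \<bullet> y) ^ Suc m) x = real (Suc m) * (u \<bullet> y) * (x \<bullet> y) ^ m"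
proof -
  have "((\<lambda>z. (z \<bullet> y) ^ Suc m) has_derivative (\<lambda>h. real (Suc m) * (x \<bullet> y) ^ m * (h \<bullet> y))) (at x)"
  proof -
    have bl: "bounded_linear (\<lambda>z::real^3. z \<bullet> y)" by (rule bounded_linear_inner_left)
    show ?thesis
      using has_derivative_power[OF bounded_linear_imp_has_derivative[OF bl], where n = "Suc m" and x = x and S = UNIV]
      by (simp add: algebra_simps)
  qed
  from dirderiv_D[OF this] show ?thesis by (simp add: algebra_simps)
qed



lemma finite_Icos: "finite Icos" unfolding Icos_iv by simp
lemma card_Icos: "card Icos = 12" unfolding Icos_iv by (simp add: card_image inj_iv)
lemma finite_Rplus: "finite Rplus" unfolding Rplus_rv by simp

definition Bf :: "real \<Rightarrow> real \<Rightarrow> real fps" where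
  "Bf k a = Abs_fps (\<lambda>n. pochhammer k n * a^n / fact n)"
definition Gf :: "real \<Rightarrow> real^3 \<Rightarrow> real fps" where
  "Gf k x = (\<Prod>z\<in>Icos. Bf k (x \<bullet> z))"
definition Lf :: "real \<Rightarrow> real fps" where
  "Lf a = 1 - fps_const a * fps_X"
definition Qf :: "real \<Rightarrow> real^3 \<Rightarrow> real^3 \<Rightarrow> real fps" where
  "Qf k x y = inverse (Lf (x \<bullet> y)) * Gf k x"

lemma Lf_0[simp]: "fps_nth (Lf a) 0 = 1" by (simp add: Lf_def)

lemma Bf_exp: "(\<lambda>r. (1 - r * a) powr (-k)) has_fps_expansion Bf k a"
proof (rule has_fps_expansionI)
  have "\<exists>d>0. \<forall>r. dist r 0 < d \<longrightarrow> \<bar>r * a\<bar> < 1"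
  proof (intro exI[of _ "1 / (\<bar>a\<bar> + 1)"] conjI allI impI)
    fix r :: real assume "dist r 0 < 1 / (\<bar>a\<bar> + 1)"
    then have r: "\<bar>r\<bar> * (\<bar>a\<bar> + 1) < 1" by (simp add: field_simps)
    have "\<bar>r * a\<bar> = \<bar>r\<bar> * \<bar>a\<bar>" by (simp add: abs_mult)
    also have "\<dots> \<le> \<bar>r\<bar> * (\<bar>a\<bar> + 1)" by (intro mult_left_mono) auto
    finally show "\<bar>r * a\<bar> < 1" using r by linarith
  qed simp
  then have ev: "eventually (\<lambda>r. \<bar>r * a\<bar> < 1) (nhds (0::real))"
    by (simp add: eventually_nhds_metric)
  show "eventually (\<lambda>u. (\<lambda>n. fps_nth (Bf k a) n * u ^ n) sums (1 - u * a) powr (-k)) (nhds 0)"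
  proof (rule eventually_mono[OF ev])
    fix u :: real assume u: "\<bar>u * a\<bar> < 1"
    have s: "(\<lambda>n. ((-k) gchoose n) * (- (u * a))^n) sums (1 + - (u * a)) powr (-k)"
      by (rule gen_binomial_real) (use u in simp)
    have "((-k) gchoose n) * (- (u * a))^n = fps_nth (Bf k a) n * u ^ n" for n
    proof -
      have "((-k) gchoose n) * (- (u * a))^n = ((-1)^n * (-1)^n) * pochhammer k n / fact n * (u * a)^n"
        by (simp add: gbinomial_pochhammer power_minus[of "u*a"])
      also have "(-1::real)^n * (-1)^n = 1" by (simp add: power_mult_distrib[symmetric])
      finally show ?thesis by (simp add: Bf_def power_mult_distrib)
    qed
    with s show "(\<lambda>n. fps_nth (Bf k a) n * u ^ n) sums (1 - u * a) powr (-k)" by simp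
  qed
qed

lemma Lf_exp: "(\<lambda>r. 1 - r * a) has_fps_expansion Lf a"
proof -
  have "(\<lambda>r. 1 - r * a) has_fps_expansion 1 - fps_X * fps_const a"
    by (intro has_fps_expansion_diff has_fps_expansion_1 has_fps_expansion_cmult_right has_fps_expansion_fps_X)
  then show ?thesis by (simp add: Lf_def mult.commute)
qed

lemma genfun_exp: "genfun k x y has_fps_expansion Qf k x y"
proof -
  have "(\<lambda>r. inverse (1 - r * (x \<bullet> y)) * (\<Prod>z\<in>Icos. (1 - r * (x \<bullet> z)) powr (-k)))
         has_fps_expansion inverse (Lf (x \<bullet> y)) * Gf k x"
    unfolding Gf_def
    by (intro has_fps_expansion_mult has_fps_expansion_inverse has_fps_expansion_prod Lf_exp Bf_exp) simp
  then show ?thesis unfolding genfun_def[abs_def] Qf_def .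
qed

lemma fps_deriv_funpow_nth0: fixes F :: "real fps" shows "fps_nth ((fps_deriv ^^ n) F) 0 = fact n * fps_nth F n"
proof (induction n arbitrary: F)
  case 0 then show ?case by simp
next
  case (Suc n)
  have "fps_nth ((fps_deriv ^^ Suc n) F) 0 = fps_nth ((fps_deriv ^^ n) (fps_deriv F)) 0"
    by (simp only: funpow_Suc_right o_def)
  also have "\<dots> = fact n * fps_nth (fps_deriv F) n" by (rule Suc.IH)
  also have "\<dots> = fact (Suc n) * fps_nth F (Suc n)" by (simp add: algebra_simps)
  finally show ?case .
qed

lemma deriv_fps_real:
  fixes f :: "real \<Rightarrow> real"
  assumes "f has_fps_expansion F"
  shows "(deriv ^^ n) f 0 = fact n * fps_nth F n"
proof -
  have "(deriv ^^ n) f has_fps_expansion (fps_deriv ^^ n) F"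
    by (induction n) (auto intro: has_fps_expansion_deriv assms)
  then have "eval_fps ((fps_deriv ^^ n) F) 0 = (deriv ^^ n) f 0"
    unfolding has_fps_expansion_def by (auto dest: eventually_nhds_x_imp_x)
  then show ?thesis by (simp add: eval_fps_at_0 fps_deriv_funpow_nth0)
qed

lemma qn_Qf: "qn k n x y = fps_nth (Qf k x y) n"
  unfolding qn_def deriv_fps_real[OF genfun_exp] by simp

lemma fps_prod_nth0: "finite A \<Longrightarrow> fps_nth (\<Prod>z\<in>A. F z) 0 = (\<Prod>z\<in>A. fps_nth (F z) 0)"
  by (induction A rule: finite_induct) auto

lemma Gf_0: "fps_nth (Gf k x) 0 = 1"
  unfolding Gf_def by (simp add: fps_prod_nth0 finite_Icos Bf_def)

lemma Qf_0: "fps_nth (Qf k x y) 0 = 1"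
  unfolding Qf_def by (simp add: Gf_0)

lemma Lf_Qf: "Lf (x \<bullet> y) * Qf k x y = Gf k x"
  unfolding Qf_def by (simp add: mult.assoc[symmetric] inverse_mult_eq_1')

lemma Qf_rec: "fps_nth (Qf k x y) (Suc n) = (x \<bullet> y) * fps_nth (Qf k x y) n + fps_nth (Gf k x) (Suc n)"
proof -
  have "fps_nth (Gf k x) (Suc n) = fps_nth (Lf (x \<bullet> y) * Qf k x y) (Suc n)" by (simp add: Lf_Qf)
  also have "Lf (x \<bullet> y) * Qf k x y = Qf k x y - fps_const (x \<bullet> y) * (fps_X * Qf k x y)"
    by (simp add: Lf_def algebra_simps)
  finally show ?thesis by simp
qed

lemma fps_deriv_prod:
  fixes F :: "'b \<Rightarrow> real fps"
  shows "finite A \<Longrightarrow> fps_deriv (\<Prod>z\<in>A. F z) = (\<Sum>z\<in>A. fps_deriv (F z) * (\<Prod>w\<in>A - {z}. F w))"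
proof (induction A rule: finite_induct)
  case empty then show ?case by simp
next
  case (insert a A)
  have "fps_deriv (\<Prod>z\<in>insert a A. F z) = fps_deriv (F a) * (\<Prod>z\<in>A. F z) + F a * fps_deriv (\<Prod>z\<in>A. F z)"
    using insert by simp
  also have "F a * fps_deriv (\<Prod>z\<in>A. F z) = (\<Sum>z\<in>A. fps_deriv (F z) * (\<Prod>w\<in>insert a A - {z}. F w))"
  proof -
    have "(\<Prod>w\<in>insert a A - {z}. F w) = F a * (\<Prod>w\<in>A - {z}. F w)" if "z \<in> A" for z
    proof -
      have "insert a A - {z} = insert a (A - {z})" using that insert by auto
      then show ?thesis using insert by simp
    qed
    then show ?thesis using insert by (simp add: sum_distrib_left algebra_simps)
  qed
  finally show ?case using insert by (simp add: insert_Diff_if add_ac)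
qed

lemma Bf_deriv: "fps_deriv (Bf k a) = fps_const (k * a) * inverse (Lf a) * Bf k a"
proof -
  have 1: "Lf a * fps_deriv (Bf k a) = fps_const (k * a) * Bf k a"
  proof (rule fps_ext)
    fix n
    show "fps_nth (Lf a * fps_deriv (Bf k a)) n = fps_nth (fps_const (k * a) * Bf k a) n"
    proof (cases n)
      case 0 then show ?thesis by (simp add: Lf_def Bf_def algebra_simps)
    next
      case (Suc m)
      have "fps_nth (Lf a * fps_deriv (Bf k a)) n = fps_nth (fps_deriv (Bf k a)) n - a * fps_nth (fps_deriv (Bf k a)) m"
        by (simp add: Lf_def algebra_simps Suc)
      also have "fps_nth (fps_deriv (Bf k a)) n = pochhammer k n * (k + n) * a^(Suc n) / fact n"
        by (simp add: Bf_def pochhammer_Suc field_simps del: of_nat_Suc)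
      also have "fps_nth (fps_deriv (Bf k a)) m = real n * (pochhammer k n * a^n / fact n)"
        by (simp add: Bf_def Suc)
      also have "pochhammer k n * (k + n) * a^(Suc n) / fact n - a * (real n * (pochhammer k n * a^n / fact n))
          = k * a * (pochhammer k n * a^n / fact n)"
        by (simp add: field_simps)
      finally show ?thesis by (simp add: Bf_def)
    qed
  qed
  have "fps_deriv (Bf k a) = inverse (Lf a) * (Lf a * fps_deriv (Bf k a))"
    by (simp add: mult.assoc[symmetric] inverse_mult_eq_1)
  also note 1
  finally show ?thesis by (simp add: algebra_simps)
qed

lemma Gf_deriv: "fps_deriv (Gf k x) = (\<Sum>z\<in>Icos. fps_const (k * (x \<bullet> z)) * Qf k x z)"
proof -
  have "fps_deriv (Gf k x) = (\<Sum>z\<in>Icos. fps_deriv (Bf k (x \<bullet> z)) * (\<Prod>w\<in>Icos - {z}. Bf k (x \<bullet> w)))"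
    unfolding Gf_def by (rule fps_deriv_prod[OF finite_Icos])
  also have "\<dots> = (\<Sum>z\<in>Icos. fps_const (k * (x \<bullet> z)) * Qf k x z)"
  proof (rule sum.cong[OF refl])
    fix z assume z: "z \<in> Icos"
    have "Gf k x = Bf k (x \<bullet> z) * (\<Prod>w\<in>Icos - {z}. Bf k (x \<bullet> w))"
      unfolding Gf_def using z finite_Icos by (simp add: prod.remove)
    then show "fps_deriv (Bf k (x \<bullet> z)) * (\<Prod>w\<in>Icos - {z}. Bf k (x \<bullet> w)) = fps_const (k * (x \<bullet> z)) * Qf k x z"
      by (simp add: Bf_deriv Qf_def algebra_simps)
  qed
  finally show ?thesis .
qed

lemma Gf_rec: "real (Suc n) * fps_nth (Gf k x) (Suc n) = k * (\<Sum>z\<in>Icos. (x \<bullet> z) * fps_nth (Qf k x z) n)"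
proof -
  have "fps_nth (fps_deriv (Gf k x)) n = fps_nth (\<Sum>z\<in>Icos. fps_const (k * (x \<bullet> z)) * Qf k x z) n"
    by (simp only: Gf_deriv)
  then show ?thesis by (simp add: fps_sum_nth sum_distrib_left algebra_simps)
qed



lemma refl_inner_sym: "refl v x \<bullet> y = x \<bullet> refl v y"
  by (simp add: refl_def inner_diff_left inner_diff_right inner_commute algebra_simps)

lemma refl_inner_self: "v \<noteq> 0 \<Longrightarrow> refl v x \<bullet> v = - (x \<bullet> v)"
  by (simp add: refl_def inner_diff_left power2_norm_eq_inner)

lemma refl_invol: "v \<noteq> 0 \<Longrightarrow> refl v (refl v x) = x"
proof -
  assume v: "v \<noteq> 0"
  have "refl v (refl v x) = refl v x + (2 * (x \<bullet> v) / (norm v)^2) *\<^sub>R v"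
    unfolding refl_def[of v "refl v x"] refl_inner_self[OF v] by simp
  also have "\<dots> = x" by (simp add: refl_def)
  finally show ?thesis .
qed

lemma norm_refl: "v \<noteq> 0 \<Longrightarrow> norm (refl v x) = norm x"
proof -
  assume v: "v \<noteq> 0"
  have "(norm (refl v x))^2 = (norm x)^2"
    unfolding power2_norm_eq_inner refl_inner_sym refl_invol[OF v] ..
  then show ?thesis by (simp add: power2_eq_iff_nonneg)
qed

lemma Rplus_nz: "v \<in> Rplus \<Longrightarrow> v \<noteq> 0"
  unfolding Rplus_rv using rv_norm by fastforce

lemma bij_refl: "v \<in> Rplus \<Longrightarrow> bij_betw (refl v) Icos Icos"
  by (rule bij_betw_byWitness[where f' = "refl v"])
     (auto simp: refl_invol Rplus_nz refl_Icos)

lemma bij_neg: "bij_betw uminus Icos Icos"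
  by (rule bij_betw_byWitness[where f' = uminus]) (auto simp: neg_Icos)

lemma Gf_refl: "v \<in> Rplus \<Longrightarrow> Gf k (refl v x) = Gf k x"
  unfolding Gf_def refl_inner_sym
  by (rule prod.reindex_bij_betw[OF bij_refl, where g = "\<lambda>w. Bf k (x \<bullet> w)"])

lemma Qf_refl: "v \<in> Rplus \<Longrightarrow> Qf k (refl v x) y = Qf k x (refl v y)"
  unfolding Qf_def by (simp add: Gf_refl refl_inner_sym)

lemma Gf_neg: "Gf k (- x) = Gf k x"
proof -
  have "Gf k (- x) = (\<Prod>z\<in>Icos. Bf k (x \<bullet> (- z)))" unfolding Gf_def by simp
  also have "\<dots> = Gf k x" unfolding Gf_def
    by (rule prod.reindex_bij_betw[OF bij_neg, where g = "\<lambda>w. Bf k (x \<bullet> w)"])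
  finally show ?thesis .
qed

lemma Qf_neg: "Qf k x (- y) = Qf k (- x) y"
  unfolding Qf_def by (simp add: Gf_neg)

lemma hom_QG:
  "fps_nth (Gf k (c *\<^sub>R x)) n = c^n * fps_nth (Gf k x) n \<and>
   (\<forall>y. fps_nth (Qf k (c *\<^sub>R x) y) n = c^n * fps_nth (Qf k x y) n)"
proof (induction n)
  case 0 then show ?case by (simp add: Gf_0 Qf_0)
next
  case (Suc n)
  have "real (Suc n) * fps_nth (Gf k (c *\<^sub>R x)) (Suc n) = k * (\<Sum>z\<in>Icos. (c *\<^sub>R x \<bullet> z) * fps_nth (Qf k (c *\<^sub>R x) z) n)"
    by (rule Gf_rec)
  also have "\<dots> = c ^ Suc n * (k * (\<Sum>z\<in>Icos. (x \<bullet> z) * fps_nth (Qf k x z) n))"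
    using Suc.IH by (simp add: sum_distrib_left algebra_simps)
  also have "\<dots> = c ^ Suc n * (real (Suc n) * fps_nth (Gf k x) (Suc n))"
    by (simp only: Gf_rec)
  finally have G: "fps_nth (Gf k (c *\<^sub>R x)) (Suc n) = c ^ Suc n * fps_nth (Gf k x) (Suc n)"
    by (simp del: of_nat_Suc)
  show ?case
  proof (intro conjI allI)
    fix y
    show "fps_nth (Qf k (c *\<^sub>R x) y) (Suc n) = c ^ Suc n * fps_nth (Qf k x y) (Suc n)"
      using Suc.IH G by (simp add: Qf_rec algebra_simps)
  qed (rule G)
qed

lemma cont_QG:
  "continuous_on UNIV (\<lambda>x. fps_nth (Gf k x) n) \<and>
   (\<forall>y. continuous_on UNIV (\<lambda>x. fps_nth (Qf k x y) n))"
proof (induction n)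
  case 0 then show ?case by (simp add: Gf_0 Qf_0)
next
  case (Suc n)
  have e: "(\<lambda>x. fps_nth (Gf k x) (Suc n)) = (\<lambda>x. k * (\<Sum>z\<in>Icos. (x \<bullet> z) * fps_nth (Qf k x z) n) / real (Suc n))"
  proof
    fix x show "fps_nth (Gf k x) (Suc n) = k * (\<Sum>z\<in>Icos. (x \<bullet> z) * fps_nth (Qf k x z) n) / real (Suc n)"
      using Gf_rec[of n k x] by (simp add: field_simps del: of_nat_Suc)
  qed
  have G: "continuous_on UNIV (\<lambda>x. fps_nth (Gf k x) (Suc n))"
    unfolding e using Suc.IH by (intro continuous_intros) auto
  show ?case
  proof (intro conjI allI)
    fix y
    show "continuous_on UNIV (\<lambda>x. fps_nth (Qf k x y) (Suc n))"
      unfolding Qf_rec using Suc.IH G by (intro continuous_intros) auto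
  qed (rule G)
qed

lemma Qf_negy: "fps_nth (Qf k x (- y)) n = (-1)^n * fps_nth (Qf k x y) n"
proof -
  have "fps_nth (Qf k x (- y)) n = fps_nth (Qf k ((-1) *\<^sub>R x) y) n" by (simp add: Qf_neg)
  also have "\<dots> = (-1)^n * fps_nth (Qf k x y) n" using hom_QG by blast
  finally show ?thesis .
qed

lemma nu_pos: "0 \<le> k \<Longrightarrow> 0 < nu k n"
  unfolding nu_def by (intro mult_pos_pos pochhammer_pos) auto

lemma nu_0: "nu k 0 = 1" by (simp add: nu_def)

lemma nu_Suc: "nu k (Suc m) = (real (Suc m) + (11 + (-1)^(Suc m)) * k) * nu k m"
proof -
  have "\<exists>j. m = 2 * j \<or> m = 2 * j + 1" by presburger
  then obtain j where "m = 2 * j \<or> m = 2 * j + 1" by blast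
  then show ?thesis
  proof
    assume m: "m = 2 * j"
    have a: "Suc m div 2 = j" "m div 2 = j" "(Suc m + 1) div 2 = Suc j" "(m + 1) div 2 = j"
      using m by presburger+
    show ?thesis unfolding nu_def a using m
      by (simp add: pochhammer_Suc field_simps)
  next
    assume m: "m = 2 * j + 1"
    have a: "Suc m div 2 = Suc j" "m div 2 = j" "(Suc m + 1) div 2 = Suc j" "(m + 1) div 2 = Suc j"
      using m by presburger+
    show ?thesis unfolding nu_def a using m
      by (simp add: pochhammer_Suc field_simps)
  qed
qed

lemma EQ:
  assumes y0: "y0 \<in> Icos"
  shows "real (Suc m) * fps_nth (Qf k x y0) (Suc m)
     + k * (\<Sum>v\<in>Rplus. fps_nth (Qf k x y0) (Suc m) - fps_nth (Qf k (refl v x) y0) (Suc m))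
     = (x \<bullet> y0) * ((real (Suc m) + (11 + (-1)^(Suc m)) * k) * fps_nth (Qf k x y0) m)"
proof -
  define h where "h y = fps_nth (Qf k x y) (Suc m)" for y
  define A where "A = x \<bullet> y0"
  define q where "q = fps_nth (Qf k x y0) m"
  define g where "g = fps_nth (Gf k x) (Suc m)"
  define T where "T = (\<Sum>z\<in>Icos. (x \<bullet> z) * fps_nth (Qf k x z) m)"
  have s1: "(\<Sum>v\<in>Rplus. fps_nth (Qf k x y0) (Suc m) - fps_nth (Qf k (refl v x) y0) (Suc m))
      = (\<Sum>v\<in>Rplus. h y0 - h (refl v y0))"
    unfolding h_def by (rule sum.cong) (simp_all add: Qf_refl)
  have s2: "(\<Sum>v\<in>Rplus. h y0 - h (refl v y0)) = 11 * h y0 + h (- y0) - (\<Sum>y\<in>Icos. h y)"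
    by (rule G3[OF y0])
  have h0: "h y0 = A * q + g" unfolding h_def A_def q_def g_def by (simp add: Qf_rec)
  have h1: "h (- y0) = - A * ((-1)^m * q) + g"
    unfolding h_def A_def q_def g_def by (simp add: Qf_rec Qf_negy)
  have hs: "(\<Sum>y\<in>Icos. h y) = T + 12 * g"
    unfolding h_def T_def g_def by (simp add: Qf_rec sum.distrib card_Icos)
  have gT: "real (Suc m) * g = k * T" unfolding g_def T_def by (rule Gf_rec)
  have "real (Suc m) * h y0 + k * (11 * h y0 + h (- y0) - (\<Sum>y\<in>Icos. h y))
      = real (Suc m) * A * q + 11 * k * A * q - k * A * ((-1)^m * q) + (real (Suc m) * g - k * T)"
    unfolding h0 h1 hs by (simp add: algebra_simps)
  also have "\<dots> = A * ((real (Suc m) + (11 + (-1)^(Suc m)) * k) * q)"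
    unfolding gT by (simp add: algebra_simps)
  finally show ?thesis unfolding s1 s2 by (simp add: h_def A_def q_def)
qed



lemma EW:
  assumes y0: "y0 \<in> Icos" and k: "0 \<le> k"
  defines "W \<equiv> \<lambda>n x. fact n / nu k n * fps_nth (Qf k x y0) n"
  shows "real (Suc m) * W (Suc m) x + k * (\<Sum>v\<in>Rplus. W (Suc m) x - W (Suc m) (refl v x))
       = real (Suc m) * (x \<bullet> y0) * W m x"
proof -
  define c where "c = fact (Suc m) / nu k (Suc m)"
  define s where "s = real (Suc m) + (11 + (-1)^(Suc m)) * k"
  have s_pos: "s > 0"
  proof -
    have "(-1::real)^(Suc m) \<ge> -1" by (cases "even m") auto
    then have "(11 + (-1)^(Suc m)) * k \<ge> 0" using k by simp
    then show ?thesis unfolding s_def by linarith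
  qed
  have nu: "nu k (Suc m) = s * nu k m" unfolding s_def by (rule nu_Suc)
  have nz: "nu k m > 0" by (rule nu_pos[OF k])
  have "real (Suc m) * W (Suc m) x + k * (\<Sum>v\<in>Rplus. W (Suc m) x - W (Suc m) (refl v x))
      = c * (real (Suc m) * fps_nth (Qf k x y0) (Suc m)
     + k * (\<Sum>v\<in>Rplus. fps_nth (Qf k x y0) (Suc m) - fps_nth (Qf k (refl v x) y0) (Suc m)))"
  proof -
    have Wc: "W (Suc m) = (\<lambda>x. c * fps_nth (Qf k x y0) (Suc m))"
      by (simp add: W_def c_def fun_eq_iff)
    show ?thesis unfolding Wc by (simp add: sum_distrib_left algebra_simps)
  qed
  also have "\<dots> = c * ((x \<bullet> y0) * (s * fps_nth (Qf k x y0) m))"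
    unfolding EQ[OF y0] s_def ..
  also have cs: "c * s = real (Suc m) * (fact m / nu k m)"
    unfolding c_def nu using s_pos nz by (simp add: field_simps del: of_nat_Suc)
  have "c * ((x \<bullet> y0) * (s * fps_nth (Qf k x y0) m)) = (c * s) * ((x \<bullet> y0) * fps_nth (Qf k x y0) m)"
    by (simp only: mult_ac)
  also have "\<dots> = real (Suc m) * (x \<bullet> y0) * W m x"
    unfolding cs W_def by (simp only: mult_ac)
  finally show ?thesis .
qed

lemma dunkl_x:
  assumes "\<forall>v\<in>Rplus. x \<bullet> v \<noteq> 0"
  shows "dunkl_dir k x f x = dirderiv x f x + k * (\<Sum>v\<in>Rplus. f x - f (refl v x))"
proof -
  define d where "d v = (f x - f (refl v x)) / (x \<bullet> v)" for v
  have "dunkl_dir k x f x = dirderiv x f x + k * (\<Sum>v\<in>Rplus. d v * (x$1 * v$1 + x$2 * v$2 + x$3 * v$3))"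
    unfolding dunkl_dir_def dunkl_def dirderiv_def d_def
    by (simp add: sum_3 algebra_simps sum_distrib_left sum.distrib)
  also have "(\<Sum>v\<in>Rplus. d v * (x$1 * v$1 + x$2 * v$2 + x$3 * v$3)) = (\<Sum>v\<in>Rplus. f x - f (refl v x))"
  proof (rule sum.cong[OF refl])
    fix v assume v: "v \<in> Rplus"
    have "x$1 * v$1 + x$2 * v$2 + x$3 * v$3 = x \<bullet> v" by (simp add: inner_vec_def sum_3)
    then show "d v * (x$1 * v$1 + x$2 * v$2 + x$3 * v$3) = f x - f (refl v x)"
      using assms v unfolding d_def by simp
  qed
  finally show ?thesis .
qed

definition wgen :: "real^3" where "wgen = vec3 2 3 7"

lemma wgen_ok: "\<forall>v\<in>Rplus. wgen \<bullet> v \<noteq> 0"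
  using tau_bounds unfolding Rplus_rv R_set wgen_def
  by (auto simp: rv_simps inner_vec3 algebra_simps)

lemma ext_generic:
  fixes F :: "real^3 \<Rightarrow> real"
  assumes cont: "continuous_on UNIV F"
    and gen: "\<And>x. (\<forall>v\<in>Rplus. x \<bullet> v \<noteq> 0) \<Longrightarrow> F x = 0"
  shows "F x = 0"
proof -
  have ev1: "eventually (\<lambda>t. (x + t *\<^sub>R wgen) \<bullet> v \<noteq> 0) (at_right 0)" if v: "v \<in> Rplus" for v
  proof (cases "x \<bullet> v = 0")
    case True
    show ?thesis
      using eventually_at_right_less[of "0::real"]
      by eventually_elim (use True wgen_ok v in \<open>auto simp: inner_add_left\<close>)
  next
    case False
    have "((\<lambda>t. (x + t *\<^sub>R wgen) \<bullet> v) \<longlongrightarrow> (x + 0 *\<^sub>R wgen) \<bullet> v) (at_right 0)"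
      by (intro tendsto_intros)
    then show ?thesis using False by (intro tendsto_imp_eventually_ne) auto
  qed
  have ev: "eventually (\<lambda>t. F (x + t *\<^sub>R wgen) = 0) (at_right 0)"
  proof -
    have "eventually (\<lambda>t. \<forall>v\<in>Rplus. (x + t *\<^sub>R wgen) \<bullet> v \<noteq> 0) (at_right 0)"
      by (rule eventually_ball_finite[OF finite_Rplus]) (use ev1 in blast)
    then show ?thesis by eventually_elim (rule gen)
  qed
  have ic: "isCont F x" using cont by (simp add: continuous_on_eq_continuous_at)
  have "((\<lambda>t. x + t *\<^sub>R wgen) \<longlongrightarrow> x + 0 *\<^sub>R wgen) (at_right 0)"
    by (intro tendsto_intros)
  then have "((\<lambda>t. x + t *\<^sub>R wgen) \<longlongrightarrow> x) (at_right 0)" by simp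
  from isCont_tendsto_compose[OF ic this]
  have "((\<lambda>t. F (x + t *\<^sub>R wgen)) \<longlongrightarrow> F x) (at_right 0)" .
  then have "((\<lambda>t. 0) \<longlongrightarrow> F x) (at_right (0::real))"
    by (rule tendsto_cong[THEN iffD1, rotated]) (use ev in simp)
  then show ?thesis by (simp add: tendsto_const_iff)
qed

lemma uniq_half:
  fixes f :: "real^3 \<Rightarrow> real"
  assumes n: "n \<ge> 1" and k: "0 \<le> k" and cont: "continuous_on UNIV f"
    and E: "\<And>x. real n * f x + k * (\<Sum>v\<in>Rplus. f x - f (refl v x)) = 0"
  shows "\<forall>y\<in>sphere 0 1. f y \<le> 0"
proof -
  have ne: "sphere (0::real^3) 1 \<noteq> {}" by (simp add: sphere_def) (metis norm_axis_1)
  obtain x0 where x0: "x0 \<in> sphere 0 1" and mx: "\<forall>y\<in>sphere 0 1. f y \<le> f x0"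
    using continuous_attains_sup[OF compact_sphere ne continuous_on_subset[OF cont]] by auto
  have "f x0 - f (refl v x0) \<ge> 0" if v: "v \<in> Rplus" for v
  proof -
    have "refl v x0 \<in> sphere 0 1" using x0 norm_refl[OF Rplus_nz[OF v]] by simp
    then show ?thesis using mx by auto
  qed
  then have "(\<Sum>v\<in>Rplus. f x0 - f (refl v x0)) \<ge> 0" by (intro sum_nonneg) auto
  then have "k * (\<Sum>v\<in>Rplus. f x0 - f (refl v x0)) \<ge> 0" using k by simp
  then have "real n * f x0 \<le> 0" using E[of x0] by linarith
  then have "f x0 \<le> 0" using n by (simp add: mult_le_0_iff)
  then show ?thesis using mx by auto
qed

lemma uniq:
  fixes f :: "real^3 \<Rightarrow> real"
  assumes n: "n \<ge> 1" and k: "0 \<le> k" and cont: "continuous_on UNIV f"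
    and hom: "\<And>c x. f (c *\<^sub>R x) = c^n * f x"
    and E: "\<And>x. real n * f x + k * (\<Sum>v\<in>Rplus. f x - f (refl v x)) = 0"
  shows "f x = 0"
proof -
  have A: "\<forall>y\<in>sphere 0 1. f y \<le> 0" by (rule uniq_half[OF n k cont E])
  have B: "\<forall>y\<in>sphere 0 1. - f y \<le> 0"
  proof (rule uniq_half[OF n k])
    show "continuous_on UNIV (\<lambda>x. - f x)" using cont by (intro continuous_intros)
    fix x show "real n * - f x + k * (\<Sum>v\<in>Rplus. - f x - - f (refl v x)) = 0"
      using E[of x] by (simp add: sum_negf[symmetric] algebra_simps sum_subtractf)
  qed
  have S: "f y = 0" if "y \<in> sphere 0 1" for y using A B that by force
  show ?thesis
  proof (cases "x = 0")
    case True
    have "f 0 = 2^n * f 0" using hom[of 2 0] by simp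
    moreover have "(2::real)^n \<noteq> 1" using power_increasing[of 1 n "2::real"] n by simp
    ultimately show ?thesis using True by (metis mult_cancel_right1)
  next
    case False
    have "x = norm x *\<^sub>R (x /\<^sub>R norm x)" using False by simp
    then have "f x = norm x ^ n * f (x /\<^sub>R norm x)" by (metis hom)
    moreover have "x /\<^sub>R norm x \<in> sphere 0 1" using False by (simp add: norm_divide)
    ultimately show ?thesis using S by simp
  qed
qed



theorem mainTheorem3:
  fixes \<kappa> :: real and V :: "(real^3 \<Rightarrow> real) \<Rightarrow> (real^3 \<Rightarrow> real)"
    and y0 :: "real^3" and n :: nat
  assumes "\<kappa> \<ge> 0"
    and "intertwining \<kappa> V"
    and "y0 \<in> Icos"
  shows "V (\<lambda>x. (x \<bullet> y0) ^ n) = (\<lambda>x. fact n / nu \<kappa> n * qn \<kappa> n x y0)"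
proof -
  note k = assms(1) and y0 = assms(3)
  have lin: "\<And>p q a b. poly3 p \<Longrightarrow> poly3 q \<Longrightarrow> V (\<lambda>x. a * p x + b * q x) = (\<lambda>x. a * V p x + b * V q x)"
    and one: "V (\<lambda>x. 1) = (\<lambda>x. 1)"
    and hom: "\<And>n p. homog3 n p \<Longrightarrow> homog3 n (V p)"
    and dk: "\<And>u p x. poly3 p \<Longrightarrow> (\<forall>v\<in>Rplus. x \<bullet> v \<noteq> 0) \<Longrightarrow> dunkl_dir \<kappa> u (V p) x = V (dirderiv u p) x"
    using assms(2) unfolding intertwining_def by blast+
  define P where "P n = V (\<lambda>x. (x \<bullet> y0) ^ n)" for n
  define W where "W n x = fact n / nu \<kappa> n * fps_nth (Qf \<kappa> x y0) n" for n x
  have Phom: "homog3 n (P n)" for n unfolding P_def by (rule hom[OF homog3_inner_pow])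
  have Pcont: "continuous_on UNIV (P n)" for n by (rule poly3_continuous[OF homog3_poly3[OF Phom]])
  have Wcont: "continuous_on UNIV (W n)" for n
    unfolding W_def[abs_def] using cont_QG by (intro continuous_intros) blast
  have Whom: "W n (c *\<^sub>R x) = c^n * W n x" for n c x
    unfolding W_def using hom_QG by (simp add: algebra_simps)
  have reflc: "continuous_on UNIV (\<lambda>x. refl v x)" for v
  proof -
    have e: "(\<lambda>x. refl v x) = (\<lambda>x. x - ((x \<bullet> v) * (2 / (norm v)^2)) *\<^sub>R v)"
      by (simp add: refl_def fun_eq_iff)
    show ?thesis unfolding e by (intro continuous_intros)
  qed
  have PW: "P n = W n" for n
  proof (induction n)
    case 0
    have "P 0 = (\<lambda>x. 1)" unfolding P_def by (simp add: one)
    moreover have "W 0 = (\<lambda>x. 1)" unfolding W_def by (simp add: nu_0 Qf_0 fun_eq_iff)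
    ultimately show ?case by simp
  next
    case (Suc m)
    have EPg: "real (Suc m) * P (Suc m) x + \<kappa> * (\<Sum>v\<in>Rplus. P (Suc m) x - P (Suc m) (refl v x))
        = real (Suc m) * (x \<bullet> y0) * P m x" if g: "\<forall>v\<in>Rplus. x \<bullet> v \<noteq> 0" for x
    proof -
      have pp: "poly3 (\<lambda>z. (z \<bullet> y0) ^ Suc m)" by (rule homog3_poly3[OF homog3_inner_pow])
      have pm: "poly3 (\<lambda>z. (z \<bullet> y0) ^ m)" by (rule homog3_poly3[OF homog3_inner_pow])
      have dd: "dirderiv x (\<lambda>z. (z \<bullet> y0) ^ Suc m) =
          (\<lambda>z. (real (Suc m) * (x \<bullet> y0)) * (z \<bullet> y0) ^ m + 0 * (z \<bullet> y0) ^ m)"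
      proof
        fix z
        show "dirderiv x (\<lambda>z. (z \<bullet> y0) ^ Suc m) z = (real (Suc m) * (x \<bullet> y0)) * (z \<bullet> y0) ^ m + 0 * (z \<bullet> y0) ^ m"
          using dirderiv_inner_pow[of x y0 m z] by simp
      qed
      have "dunkl_dir \<kappa> x (P (Suc m)) x = V (dirderiv x (\<lambda>z. (z \<bullet> y0) ^ Suc m)) x"
        unfolding P_def by (rule dk[OF pp g])
      also have "\<dots> = real (Suc m) * (x \<bullet> y0) * P m x"
        unfolding dd lin[OF pm pm] P_def by simp
      finally have 1: "dunkl_dir \<kappa> x (P (Suc m)) x = real (Suc m) * (x \<bullet> y0) * P m x" .
      obtain D where D: "(P (Suc m) has_derivative D) (at x)"
        using poly3_differentiable[OF homog3_poly3[OF Phom]] unfolding differentiable_def by blast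
      have 2: "dirderiv x (P (Suc m)) x = real (Suc m) * P (Suc m) x"
        unfolding dirderiv_D[OF D] by (rule euler[OF Phom D])
      show ?thesis using 1 dunkl_x[OF g, of \<kappa> "P (Suc m)"] 2 by simp
    qed
    have EP: "real (Suc m) * P (Suc m) x + \<kappa> * (\<Sum>v\<in>Rplus. P (Suc m) x - P (Suc m) (refl v x))
        - real (Suc m) * (x \<bullet> y0) * P m x = 0" for x
    proof (rule ext_generic[where F = "\<lambda>x. real (Suc m) * P (Suc m) x + \<kappa> * (\<Sum>v\<in>Rplus. P (Suc m) x - P (Suc m) (refl v x))
        - real (Suc m) * (x \<bullet> y0) * P m x"])
      show "continuous_on UNIV (\<lambda>x. real (Suc m) * P (Suc m) x + \<kappa> * (\<Sum>v\<in>Rplus. P (Suc m) x - P (Suc m) (refl v x))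
        - real (Suc m) * (x \<bullet> y0) * P m x)"
        using Pcont reflc
        by (intro continuous_intros continuous_on_compose2[OF Pcont reflc]) auto
    qed (simp only: EPg diff_self)
    define d where "d x = P (Suc m) x - W (Suc m) x" for x
    have "d x = 0" for x
    proof (rule uniq[where n = "Suc m" and k = \<kappa>])
      show "continuous_on UNIV d" unfolding d_def[abs_def] using Pcont Wcont by (intro continuous_intros) auto
      show "d (c *\<^sub>R x) = c ^ Suc m * d x" for c x
        unfolding d_def Whom homog3_scale[OF Phom] by (simp add: algebra_simps)
      fix x
      have EWx: "real (Suc m) * W (Suc m) x + \<kappa> * (\<Sum>v\<in>Rplus. W (Suc m) x - W (Suc m) (refl v x))
          = real (Suc m) * (x \<bullet> y0) * W m x"
        unfolding W_def by (rule EW[OF y0 k])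
      define SP where "SP = (\<Sum>v\<in>Rplus. P (Suc m) x - P (Suc m) (refl v x))"
      define SW where "SW = (\<Sum>v\<in>Rplus. W (Suc m) x - W (Suc m) (refl v x))"
      have sd: "(\<Sum>v\<in>Rplus. d x - d (refl v x)) = SP - SW"
        unfolding SP_def SW_def sum_subtractf[symmetric] d_def by (rule sum.cong) (simp_all add: algebra_simps)
      have "real (Suc m) * d x + \<kappa> * (\<Sum>v\<in>Rplus. d x - d (refl v x))
          = (real (Suc m) * P (Suc m) x + \<kappa> * SP) - (real (Suc m) * W (Suc m) x + \<kappa> * SW)"
        unfolding sd unfolding d_def by (simp add: algebra_simps)
      also have "\<dots> = real (Suc m) * (x \<bullet> y0) * P m x - real (Suc m) * (x \<bullet> y0) * W m x"
        using EP[of x] EWx unfolding SP_def SW_def by linarith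
      also have "\<dots> = 0" using Suc.IH by simp
      finally show "real (Suc m) * d x + \<kappa> * (\<Sum>v\<in>Rplus. d x - d (refl v x)) = 0" .
    qed (use k in auto)
    then show ?case unfolding d_def by (simp add: fun_eq_iff)
  qed
  show ?thesis using PW[of n] unfolding P_def W_def by (simp add: qn_Qf fun_eq_iff)
qed


end
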